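(* Let $(G=(V,E),L,w)$ be a WTAP instance with a fixed root $r\in V$, let $F\subseteq L$ be a WTAP solution (i.e. $\bigcup_{\ell\in F}P_\ell=E$), and let $U\subseteq L_{\mathrm{up}}$ be a set of up-links such that the sets $P_u$, $u\in U$, are pairwise disjoint. Then for every $\epsilon>0$ there exist a partition $\mathcal{C}$ of $F$ into $\lceil 1/\epsilon\rceil$-thin sets and a set $R\subseteq U$ such that (1) for every $u\in U\setminus R$ there is some $C\in\mathcal{C}$ with $P_u\subseteq\bigcup_{\ell\in C}P_\ell$, and (2) $w(R)\le\epsilon\cdot w(U)$.
   Context: A WTAP instance consists of a spanning tree $G=(V,E)$, a set of links $L\subseteq\binom{V}{2}$, and positive weights $w\colon L\to\mathbb{R}_{>0}$; $w(X)=\sum_{\ell\in X}w(\ell)$. For a link $\ell$, $P_\ell\subseteq E$ is the edge set of the unique path in $G$ between the endpoints of $\ell$, and $V_\ell$ the vertex set of that path (including endpoints). With respect to the root $r$, an up-link is a link one of whose endpoints lies on the unique path in $G$ from $r$ to the other endpoint; $L_{\mathrm{up}}$ is the set of up-links. A link set $C\subseteq L$ is $k$-thin if every vertex $v\in V$ lies in $V_\ell$ for at most $k$ links $\ell\in C$. *)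

theory Defs
  imports Complex_Main "HOL-Library.Disjoint_Sets"
begin

definition is_path :: "'a set set \<Rightarrow> 'a list \<Rightarrow> 'a \<Rightarrow> 'a \<Rightarrow> bool" where
  "is_path E p u v \<longleftrightarrow> p \<noteq> [] \<and> hd p = u \<and> last p = v \<and> distinct p \<and>
     (\<forall>i. Suc i < length p \<longrightarrow> {p ! i, p ! Suc i} \<in> E)"

definition is_tree :: "'a set \<Rightarrow> 'a set set \<Rightarrow> bool" where
  "is_tree V E \<longleftrightarrow> finite V \<and> V \<noteq> {} \<and>
     E \<subseteq> {{a, b} | a b. a \<in> V \<and> b \<in> V \<and> a \<noteq> b} \<and>
     (\<forall>u\<in>V. \<forall>v\<in>V. \<exists>!p. is_path E p u v)"

definition tree_path :: "'a set set \<Rightarrow> 'a \<Rightarrow> 'a \<Rightarrow> 'a list" where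
  "tree_path E u v = (THE p. is_path E p u v)"

definition path_edges :: "'a list \<Rightarrow> 'a set set" where
  "path_edges p = {{p ! i, p ! Suc i} | i. Suc i < length p}"

definition link_edges :: "'a set set \<Rightarrow> 'a set \<Rightarrow> 'a set set" where
  "link_edges E l = \<Union>{path_edges (tree_path E a b) | a b. l = {a, b}}"

definition link_verts :: "'a set set \<Rightarrow> 'a set \<Rightarrow> 'a set" where
  "link_verts E l = \<Union>{set (tree_path E a b) | a b. l = {a, b}}"

definition is_up_link :: "'a set set \<Rightarrow> 'a \<Rightarrow> 'a set \<Rightarrow> bool" where
  "is_up_link E r l \<longleftrightarrow> (\<exists>a b. l = {a, b} \<and> a \<in> set (tree_path E r b))"

definition k_thin :: "'a set \<Rightarrow> 'a set set \<Rightarrow> nat \<Rightarrow> 'a set set \<Rightarrow> bool" where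
  "k_thin V E k C \<longleftrightarrow> (\<forall>v\<in>V. card {l \<in> C. v \<in> link_verts E l} \<le> k)"

definition wtap_instance :: "'a set \<Rightarrow> 'a set set \<Rightarrow> 'a set set \<Rightarrow> ('a set \<Rightarrow> real) \<Rightarrow> bool" where
  "wtap_instance V E L w \<longleftrightarrow> is_tree V E \<and>
     L \<subseteq> {{a, b} | a b. a \<in> V \<and> b \<in> V \<and> a \<noteq> b} \<and> (\<forall>l\<in>L. w l > 0)"

definition wtap_solution :: "'a set set \<Rightarrow> 'a set set \<Rightarrow> 'a set set \<Rightarrow> bool" where
  "wtap_solution E L F \<longleftrightarrow> F \<subseteq> L \<and> (\<Union>l\<in>F. link_edges E l) = E"

end

theory Submission
  imports Defs
begin


lemma path_take: "is_path E p u v \<Longrightarrow> i < length p \<Longrightarrow> is_path E (take (Suc i) p) u (p!i)"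
proof -
  assume a: "is_path E p u v" "i < length p"
  have l: "last (take (Suc i) p) = p ! i"
    using a(2) by (simp add: take_Suc_conv_app_nth)
  show ?thesis using a unfolding is_path_def by (auto simp: hd_take l)
qed

lemma path_drop: "is_path E p u v \<Longrightarrow> i < length p \<Longrightarrow> is_path E (drop i p) (p!i) v"
  unfolding is_path_def
  by (auto simp: hd_drop_conv_nth)

lemma path_rev: "is_path E p u v \<Longrightarrow> is_path E (rev p) v u"
  unfolding is_path_def
proof (intro conjI allI impI)
  assume a: "p \<noteq> [] \<and> hd p = u \<and> last p = v \<and> distinct p \<and> (\<forall>i. Suc i < length p \<longrightarrow> {p ! i, p ! Suc i} \<in> E)"
  show "rev p \<noteq> []" using a by simp
  show "hd (rev p) = v" using a by (simp add: hd_rev)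
  show "last (rev p) = u" using a by (simp add: last_rev)
  show "distinct (rev p)" using a by simp
  fix i assume i: "Suc i < length (rev p)"
  have "{p ! (length p - Suc (Suc i)), p ! Suc (length p - Suc (Suc i))} \<in> E"
    using a i by simp
  moreover have "Suc (length p - Suc (Suc i)) = length p - Suc i" using i by simp
  ultimately show "{rev p ! i, rev p ! Suc i} \<in> E"
    using i by (simp add: rev_nth insert_commute)
qed

lemma path_append:
  assumes p: "is_path E p u w" and q: "is_path E q w v" and int: "set p \<inter> set q = {w}"
  shows "is_path E (p @ tl q) u v"
proof -
  from p have pne: "p \<noteq> []" and hp: "hd p = u" and lp: "last p = w" and dp: "distinct p"
    and ep: "\<And>i. Suc i < length p \<Longrightarrow> {p ! i, p ! Suc i} \<in> E" unfolding is_path_def by auto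
  from q have qne: "q \<noteq> []" and hq: "hd q = w" and lq: "last q = v" and dq: "distinct q"
    and eq: "\<And>i. Suc i < length q \<Longrightarrow> {q ! i, q ! Suc i} \<in> E" unfolding is_path_def by auto
  have qs: "q = w # tl q" using qne hq by (cases q) auto
  have "w \<notin> set (tl q)" using dq qs by (metis distinct.simps(2))
  moreover have "set (tl q) \<subseteq> set q" by (cases q) auto
  ultimately have dis: "set p \<inter> set (tl q) = {}"
  proof -
    assume a1: "w \<notin> set (tl q)" and a2: "set (tl q) \<subseteq> set q"
    { fix x assume "x \<in> set p" "x \<in> set (tl q)"
      hence "x \<in> set p \<inter> set q" using a2 by auto
      hence "x = w" using int by auto
      hence False using a1 `x \<in> set (tl q)` by simp }
    thus ?thesis by auto
  qed
  show ?thesis unfolding is_path_def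
  proof (intro conjI allI impI)
    show "p @ tl q \<noteq> []" using pne by simp
    show "hd (p @ tl q) = u" using pne hp by simp
    show "last (p @ tl q) = v"
    proof (cases "tl q = []")
      case True then have "q = [w]" using qs by simp
      then show ?thesis using True lp lq by simp
    next
      case False then show ?thesis using lq qs by (metis last_ConsR last_appendR)
    qed
    show "distinct (p @ tl q)" using dp dq dis by (simp add: distinct_tl)
    fix i assume i: "Suc i < length (p @ tl q)"
    show "{(p @ tl q) ! i, (p @ tl q) ! Suc i} \<in> E"
    proof (cases "Suc i < length p")
      case True then show ?thesis using ep[OF True] by (simp add: nth_append)
    next
      case False
      show ?thesis
      proof (cases "i < length p")
        case True
        with False have il: "i = length p - 1" by simp
        have "p ! i = w" using il lp pne by (simp add: last_conv_nth)
        moreover have q1: "Suc 0 < length q" using i False True by simp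
        moreover have "(p @ tl q) ! Suc i = q ! 1" using il pne False True q1
          by (simp add: nth_append nth_tl)
        ultimately show ?thesis using eq[of 0] True hq qne by (simp add: nth_append hd_conv_nth)
      next
        case False2: False
        define j where "j = i - length p"
        have jl: "Suc (Suc j) < length q" using i False2 j_def by simp
        have "(p @ tl q) ! i = q ! Suc j" using False2 jl by (simp add: nth_append nth_tl j_def)
        moreover have "(p @ tl q) ! Suc i = q ! Suc (Suc j)" using False2 jl
          by (simp add: nth_append nth_tl j_def Suc_diff_le)
        moreover note jl
        ultimately show ?thesis using eq[of "Suc j"] by simp
      qed
    qed
  qed
qed

lemma path_sing: "is_path E [u] u u" unfolding is_path_def by simp

lemma path_edge: "{x,y} \<in> E \<Longrightarrow> x \<noteq> y \<Longrightarrow> is_path E [x,y] x y"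
  unfolding is_path_def by (auto simp: less_Suc_eq)


locale rtree =
  fixes V :: "'a set" and E :: "'a set set" and r :: 'a
  assumes tr: "is_tree V E" and rV: "r \<in> V"
begin

lemma finV: "finite V" using tr unfolding is_tree_def by auto
lemma Esub: "E \<subseteq> {{a, b} | a b. a \<in> V \<and> b \<in> V \<and> a \<noteq> b}" using tr unfolding is_tree_def by auto
lemma uniq: "u \<in> V \<Longrightarrow> v \<in> V \<Longrightarrow> \<exists>!p. is_path E p u v" using tr unfolding is_tree_def by auto

lemma tp_path: "u \<in> V \<Longrightarrow> v \<in> V \<Longrightarrow> is_path E (tree_path E u v) u v"
  unfolding tree_path_def by (rule theI') (rule uniq)

lemma tp_unique: "is_path E p u v \<Longrightarrow> u \<in> V \<Longrightarrow> v \<in> V \<Longrightarrow> tree_path E u v = p"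
  using uniq tp_path by blast

lemma edgeV: "{x, y} \<in> E \<Longrightarrow> x \<in> V \<and> y \<in> V \<and> x \<noteq> y"
  using Esub by (auto simp: doubleton_eq_iff)

lemma path_V: assumes "is_path E p u v" "u \<in> V" shows "set p \<subseteq> V"
proof
  fix x assume "x \<in> set p"
  then obtain i where i: "i < length p" "x = p ! i" by (auto simp: in_set_conv_nth)
  show "x \<in> V"
  proof (cases i)
    case 0 then show ?thesis using assms i by (auto simp: is_path_def hd_conv_nth)
  next
    case (Suc j)
    then have "{p ! j, p ! Suc j} \<in> E" using assms i unfolding is_path_def by auto
    then show ?thesis using edgeV i Suc by auto
  qed
qed

lemma path_adj:
  assumes p: "is_path E p u v" and ij: "i < j" "j < length p" and e: "{p ! i, p ! j} \<in> E"
  shows "j = Suc i"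
proof -
  have ne: "p ! i \<noteq> p ! j" using edgeV[OF e] by simp
  have "is_path E (take (Suc j) p) u (p ! j)" using path_take[OF p ij(2)] .
  from path_drop[OF this, of i] ij
  have sp: "is_path E (drop i (take (Suc j) p)) (p ! i) (p ! j)" by simp
  have xV: "p ! i \<in> V" "p ! j \<in> V" using edgeV[OF e] by auto
  have "tree_path E (p ! i) (p ! j) = drop i (take (Suc j) p)" using tp_unique[OF sp xV] .
  moreover have "tree_path E (p ! i) (p ! j) = [p ! i, p ! j]"
    using tp_unique[OF path_edge[OF e ne] xV] .
  ultimately have eq: "drop i (take (Suc j) p) = [p ! i, p ! j]" by simp
  have "length (drop i (take (Suc j) p)) = 2" by (simp only: eq) simp
  then show ?thesis using ij by simp
qed

definition rp where "rp x = tree_path E r x"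
definition dep where "dep x = length (rp x) - 1"
definition anc where "anc x y \<longleftrightarrow> y \<in> V \<and> x \<in> set (rp y)"

lemma rp_path: "x \<in> V \<Longrightarrow> is_path E (rp x) r x"
  unfolding rp_def using tp_path rV by blast

lemma rp_basic: assumes "x \<in> V"
  shows "rp x \<noteq> []" "hd (rp x) = r" "last (rp x) = x" "distinct (rp x)" "length (rp x) = Suc (dep x)"
  using rp_path[OF assms] unfolding is_path_def dep_def by auto

lemma rp_V: "x \<in> V \<Longrightarrow> set (rp x) \<subseteq> V" using path_V rp_path rV by blast

lemma rp_last: "x \<in> V \<Longrightarrow> rp x ! dep x = x"
  using rp_basic[of x] by (simp add: last_conv_nth)

lemma rp_take: assumes "x \<in> V" "i \<le> dep x"
  shows "rp (rp x ! i) = take (Suc i) (rp x)"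
proof -
  have i: "i < length (rp x)" using assms rp_basic by simp
  have "rp x ! i \<in> V" using rp_V[OF assms(1)] i by auto
  moreover have "is_path E (take (Suc i) (rp x)) r (rp x ! i)"
    using path_take[OF rp_path[OF assms(1)] i] .
  ultimately show ?thesis using tp_unique rV unfolding rp_def by blast
qed

lemma dep_nth: assumes "x \<in> V" "i \<le> dep x" shows "dep (rp x ! i) = i"
  using rp_take[OF assms] rp_basic(5)[OF assms(1)] assms(2) unfolding dep_def by simp

lemma anc_iff: "anc y x \<longleftrightarrow> x \<in> V \<and> dep y \<le> dep x \<and> rp x ! dep y = y"
proof
  assume a: "anc y x"
  then have xV: "x \<in> V" unfolding anc_def by simp
  from a obtain i where i: "i < length (rp x)" "y = rp x ! i" unfolding anc_def by (auto simp: in_set_conv_nth)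
  then have "i \<le> dep x" using rp_basic[OF xV] by simp
  then have "dep y = i" using dep_nth[OF xV] i by simp
  then show "x \<in> V \<and> dep y \<le> dep x \<and> rp x ! dep y = y" using xV i rp_basic[OF xV] by simp
next
  assume a: "x \<in> V \<and> dep y \<le> dep x \<and> rp x ! dep y = y"
  then have "dep y < length (rp x)" using rp_basic by simp
  then show "anc y x" using a unfolding anc_def by (metis nth_mem)
qed

lemma anc_V: "anc y x \<Longrightarrow> y \<in> V \<and> x \<in> V"
  unfolding anc_def using rp_V by blast

lemma anc_refl: "x \<in> V \<Longrightarrow> anc x x"
  unfolding anc_def using rp_basic(1,3) last_in_set by metis

lemma anc_dep: "anc x y \<Longrightarrow> dep x \<le> dep y" by (simp add: anc_iff)

lemma anc_eq: "anc x y \<Longrightarrow> dep x = dep y \<Longrightarrow> x = y"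
  using anc_iff rp_last by metis

lemma anc_antisym: "anc x y \<Longrightarrow> anc y x \<Longrightarrow> x = y"
  using anc_dep anc_eq le_antisym by metis

lemma anc_trans: assumes "anc x y" "anc y z" shows "anc x z"
proof -
  have zV: "z \<in> V" and yz: "dep y \<le> dep z" "rp z ! dep y = y" using assms(2) anc_iff by auto
  have "rp y = take (Suc (dep y)) (rp z)" using rp_take[OF zV yz(1)] yz(2) by simp
  then have "set (rp y) \<subseteq> set (rp z)" by (metis set_take_subset)
  then show ?thesis using assms(1) zV unfolding anc_def by auto
qed

lemma anc_chain: assumes "anc x z" "anc y z" "dep x \<le> dep y" shows "anc x y"
proof -
  have zV: "z \<in> V" using assms anc_V by auto
  have yz: "dep y \<le> dep z" "rp z ! dep y = y" using assms(2) anc_iff by auto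
  have xz: "rp z ! dep x = x" using assms(1) anc_iff by auto
  have "rp y = take (Suc (dep y)) (rp z)" using rp_take[OF zV yz(1)] yz(2) by simp
  then have "rp y ! dep x = x" using assms(3) xz by simp
  moreover have "y \<in> V" using anc_V assms(2) by auto
  ultimately show ?thesis using assms(3) anc_iff by auto
qed

lemma anc_lin: "anc x z \<Longrightarrow> anc y z \<Longrightarrow> anc x y \<or> anc y x"
  using anc_chain le_cases by metis

lemma anc_at: assumes "anc x y" "dep x \<le> d" "d \<le> dep y"
  shows "\<exists>w. anc x w \<and> anc w y \<and> dep w = d"
proof -
  have yV: "y \<in> V" using assms anc_V by auto
  let ?w = "rp y ! d"
  have dw: "dep ?w = d" using dep_nth[OF yV assms(3)] .
  have wy: "anc ?w y" using anc_iff yV dw assms(3) by simp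
  have "anc x ?w" using anc_chain[OF assms(1) wy] dw assms(2) by simp
  then show ?thesis using wy dw by blast
qed

lemma anc_root: "x \<in> V \<Longrightarrow> anc r x"
  unfolding anc_def using rp_basic(1,2) hd_in_set by metis

lemma dep_root: "dep r = 0"
proof -
  have "tree_path E r r = [r]" using tp_unique[OF path_sing rV rV] .
  then show ?thesis unfolding dep_def rp_def by simp
qed

lemma dep0: assumes "x \<in> V" "dep x = 0" shows "x = r"
  using anc_eq[OF anc_root[OF assms(1)]] assms dep_root by simp

definition par where "par x = rp x ! (dep x - 1)"

lemma par: assumes "x \<in> V" "x \<noteq> r"
  shows "anc (par x) x" "dep (par x) = dep x - 1" "0 < dep x" "{par x, x} \<in> E"
    "par x \<noteq> x" "\<And>w. anc w x \<Longrightarrow> w \<noteq> x \<Longrightarrow> anc w (par x)"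
proof -
  show d: "0 < dep x" using dep0 assms by auto
  show dp: "dep (par x) = dep x - 1" unfolding par_def using dep_nth[OF assms(1)] by simp
  show a: "anc (par x) x" using anc_iff assms(1) dp unfolding par_def by simp
  show "par x \<noteq> x" using dp d by auto
  have "Suc (dep x - 1) < length (rp x)" using d rp_basic(5)[OF assms(1)] by simp
  then have "{rp x ! (dep x - 1), rp x ! Suc (dep x - 1)} \<in> E"
    using rp_path[OF assms(1)] unfolding is_path_def by blast
  then show "{par x, x} \<in> E" using d rp_last[OF assms(1)] unfolding par_def by simp
  fix w assume "anc w x" "w \<noteq> x"
  then have "dep w < dep x" using anc_dep anc_eq by fastforce
  then show "anc w (par x)" using anc_chain[OF \<open>anc w x\<close> a] dp by simp
qed

end


context rtree begin

lemma lca_ex: assumes "a \<in> V" "b \<in> V"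
  shows "\<exists>l. anc l a \<and> anc l b \<and> (\<forall>x. anc x a \<and> anc x b \<longrightarrow> anc x l)"
proof -
  let ?C = "{x. anc x a \<and> anc x b}"
  have fin: "finite ?C" using finV anc_V by (auto intro: finite_subset)
  have ne: "r \<in> ?C" using anc_root assms by auto
  let ?m = "Max (dep ` ?C)"
  have "?m \<in> dep ` ?C" using fin ne by (intro Max_in) auto
  then obtain l where l1: "l \<in> ?C" "dep l = ?m" by auto
  have "\<forall>x\<in>?C. dep x \<le> dep l" using l1 fin by auto
  note l = l1(1) this
  show ?thesis using l anc_chain by blast
qed

definition lca where "lca a b = (SOME l. anc l a \<and> anc l b \<and> (\<forall>x. anc x a \<and> anc x b \<longrightarrow> anc x l))"

lemma lca: assumes "a \<in> V" "b \<in> V"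
  shows "anc (lca a b) a" "anc (lca a b) b" "\<And>x. anc x a \<Longrightarrow> anc x b \<Longrightarrow> anc x (lca a b)"
  using someI_ex[OF lca_ex[OF assms]] unfolding lca_def by blast+

lemma lca_unique: assumes "a \<in> V" "b \<in> V" "anc l a" "anc l b" "\<And>x. anc x a \<Longrightarrow> anc x b \<Longrightarrow> anc x l"
  shows "lca a b = l"
  using lca[OF assms(1,2)] assms(3-5) anc_antisym by metis

lemma lca_comm: "a \<in> V \<Longrightarrow> b \<in> V \<Longrightarrow> lca a b = lca b a"
  using lca_unique lca by metis

lemma lca_anc: "a \<in> V \<Longrightarrow> anc a b \<Longrightarrow> lca a b = a"
  using lca_unique anc_refl anc_V by metis

lemma set_drop_rp: assumes "a \<in> V"
  shows "set (drop d (rp a)) = {x. anc x a \<and> d \<le> dep x}"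
proof
  show "set (drop d (rp a)) \<subseteq> {x. anc x a \<and> d \<le> dep x}"
  proof
    fix x assume "x \<in> set (drop d (rp a))"
    then obtain i where i: "i < length (rp a) - d" "x = drop d (rp a) ! i" by (auto simp: in_set_conv_nth)
    then have x: "x = rp a ! (d + i)" "d + i < length (rp a)" by auto
    then have "anc x a" unfolding anc_def using assms by auto
    moreover have "dep x = d + i" using x dep_nth[OF assms] rp_basic(5)[OF assms] by simp
    ultimately show "x \<in> {x. anc x a \<and> d \<le> dep x}" by simp
  qed
next
  show "{x. anc x a \<and> d \<le> dep x} \<subseteq> set (drop d (rp a))"
  proof
    fix x assume x: "x \<in> {x. anc x a \<and> d \<le> dep x}"
    then have "rp a ! dep x = x" "dep x \<le> dep a" using anc_iff by auto
    then have "x = drop d (rp a) ! (dep x - d)" "dep x - d < length (drop d (rp a))"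
      using x rp_basic(5)[OF assms] by auto
    then show "x \<in> set (drop d (rp a))" by (metis nth_mem)
  qed
qed

lemma tp_char: assumes aV: "a \<in> V" and bV: "b \<in> V"
  defines "l \<equiv> lca a b"
  shows "tree_path E a b = rev (drop (dep l) (rp a)) @ tl (drop (dep l) (rp b))"
    "set (tree_path E a b) = {x. anc l x \<and> (anc x a \<or> anc x b)}"
proof -
  let ?d = "dep l"
  have la: "anc l a" and lb: "anc l b" using lca[OF aV bV] l_def by auto
  have dla: "?d < length (rp a)" using anc_dep[OF la] rp_basic(5)[OF aV] by simp
  have dlb: "?d < length (rp b)" using anc_dep[OF lb] rp_basic(5)[OF bV] by simp
  have pa: "is_path E (drop ?d (rp a)) l a"
    using path_drop[OF rp_path[OF aV] dla] la anc_iff by simp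
  have pb: "is_path E (drop ?d (rp b)) l b"
    using path_drop[OF rp_path[OF bV] dlb] lb anc_iff by simp
  have sa: "set (drop ?d (rp a)) = {x. anc x a \<and> ?d \<le> dep x}" using set_drop_rp[OF aV] .
  have sb: "set (drop ?d (rp b)) = {x. anc x b \<and> ?d \<le> dep x}" using set_drop_rp[OF bV] .
  have int: "set (rev (drop ?d (rp a))) \<inter> set (drop ?d (rp b)) = {l}"
  proof
    show "set (rev (drop ?d (rp a))) \<inter> set (drop ?d (rp b)) \<subseteq> {l}"
    proof
      fix x assume "x \<in> set (rev (drop ?d (rp a))) \<inter> set (drop ?d (rp b))"
      then have x: "anc x a" "anc x b" "?d \<le> dep x" using sa sb by auto
      then have "anc x l" using lca(3)[OF aV bV] l_def by simp
      then show "x \<in> {l}" using x(3) anc_dep anc_eq le_antisym by fastforce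
    qed
    show "{l} \<subseteq> set (rev (drop ?d (rp a))) \<inter> set (drop ?d (rp b))"
      using sa sb la lb by auto
  qed
  have p: "is_path E (rev (drop ?d (rp a)) @ tl (drop ?d (rp b))) a b"
    using path_append[OF path_rev[OF pa] pb int] .
  show "tree_path E a b = rev (drop ?d (rp a)) @ tl (drop ?d (rp b))"
    using tp_unique[OF p aV bV] .
  have hb: "drop ?d (rp b) = l # tl (drop ?d (rp b))"
    using pb unfolding is_path_def by (metis list.collapse)
  have "set (drop ?d (rp b)) = insert l (set (tl (drop ?d (rp b))))"
    by (subst hb) simp
  moreover have "l \<in> set (drop ?d (rp a))" using sa la by simp
  ultimately have "set (tree_path E a b) = set (drop ?d (rp a)) \<union> set (drop ?d (rp b))"
    using tp_unique[OF p aV bV] by auto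
  also have "\<dots> = {x. anc l x \<and> (anc x a \<or> anc x b)}"
    using sa sb la lb anc_chain anc_dep by blast
  finally show "set (tree_path E a b) = {x. anc l x \<and> (anc x a \<or> anc x b)}" .
qed

end

context rtree begin
lemma edge_par: assumes e: "{x, y} \<in> E"
  shows "(x \<noteq> r \<and> y = par x) \<or> (y \<noteq> r \<and> x = par y)"
proof -
  have xV: "x \<in> V" and yV: "y \<in> V" and ne: "x \<noteq> y" using edgeV[OF e] by auto
  define l where "l = lca x y"
  have lx: "anc l x" and ly: "anc l y" using lca[OF xV yV] l_def by auto
  have t1: "tree_path E x y = [x, y]" using tp_unique[OF path_edge[OF e ne] xV yV] .
  have t2: "tree_path E x y = rev (drop (dep l) (rp x)) @ tl (drop (dep l) (rp y))"
    unfolding l_def by (rule tp_char(1)[OF xV yV])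
  have "length (rev (drop (dep l) (rp x)) @ tl (drop (dep l) (rp y))) = length [x,y]"
    using t1 t2 by (simp only:)
  then have len: "(Suc (dep x) - dep l) + (Suc (dep y) - dep l - 1) = 2"
    by (simp only: length_append length_rev length_tl length_drop rp_basic(5)[OF xV] rp_basic(5)[OF yV]) simp
  have dx: "dep l \<le> dep x" and dy: "dep l \<le> dep y" using anc_dep lx ly by auto
  show ?thesis
  proof (cases "dep x = dep l")
    case True
    have xl: "l = x" by (rule anc_eq[OF lx]) (use True in simp)
    have dyl: "dep y = Suc (dep l)" using len True dy by linarith
    have yr: "y \<noteq> r" using dyl dep_root by auto
    have "dep (par y) = dep l" using par(2)[OF yV yr] dyl by simp
    moreover have "anc l (par y)" using par(6)[OF yV yr ly] xl ne by blast
    ultimately have "l = par y" using anc_eq[of l "par y"] by metis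
    then show ?thesis using yr xl by blast
  next
    case False
    then have dxl: "dep x = Suc (dep l)" "dep y = dep l" using len dx dy by linarith+
    have yl: "l = y" by (rule anc_eq[OF ly]) (use dxl in simp)
    have xr: "x \<noteq> r" using dxl dep_root by auto
    have "dep (par x) = dep l" using par(2)[OF xV xr] dxl by simp
    moreover have "anc l (par x)" using par(6)[OF xV xr lx] yl ne by blast
    ultimately have "l = par x" using anc_eq[of l "par x"] by metis
    then show ?thesis using xr yl by blast
  qed
qed

lemma par_inj: assumes "x \<in> V" "x \<noteq> r" "y \<in> V" "y \<noteq> r" "{par x, x} = {par y, y}"
  shows "x = y"
proof -
  have "x = y \<or> (x = par y \<and> y = par x)" using assms(5) by (auto simp: doubleton_eq_iff)
  moreover have "dep (par x) < dep x" using par(2,3)[OF assms(1,2)] by simp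
  moreover have "dep (par y) < dep y" using par(2,3)[OF assms(3,4)] by simp
  ultimately show ?thesis by auto
qed

lemma tp_edges: assumes aV: "a \<in> V" and bV: "b \<in> V"
  shows "path_edges (tree_path E a b) = {{par z, z} | z. z \<in> set (tree_path E a b) \<and> z \<noteq> lca a b}"
proof -
  let ?p = "tree_path E a b" and ?l = "lca a b"
  have p: "is_path E ?p a b" using tp_path aV bV by simp
  have S: "set ?p = {x. anc ?l x \<and> (anc x a \<or> anc x b)}" using tp_char(2)[OF aV bV] by simp
  show ?thesis unfolding path_edges_def
  proof (intro equalityI subsetI)
    fix e assume "e \<in> {{?p ! i, ?p ! Suc i} |i. Suc i < length ?p}"
    then obtain i where i: "Suc i < length ?p" "e = {?p ! i, ?p ! Suc i}" by auto
    have eE: "e \<in> E" using p i unfolding is_path_def by auto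
    have mem: "?p ! i \<in> set ?p" "?p ! Suc i \<in> set ?p" using i by auto
    have nl: "\<And>z. z \<in> set ?p \<Longrightarrow> z \<noteq> r \<Longrightarrow> par z \<in> set ?p \<Longrightarrow> z \<noteq> ?l"
    proof
      fix z assume z: "z \<in> set ?p" "z \<noteq> r" "par z \<in> set ?p" "z = ?l"
      have zV: "z \<in> V" using path_V[OF p aV] z by auto
      have "anc ?l (par z)" using S z by auto
      then have "dep z \<le> dep (par z)" using z anc_dep by simp
      then show False using par(2,3)[OF zV z(2)] by simp
    qed
    from edge_par[OF eE[unfolded i(2)]]
    show "e \<in> {{par z, z} |z. z \<in> set ?p \<and> z \<noteq> ?l}"
    proof
      assume h: "?p ! i \<noteq> r \<and> ?p ! Suc i = par (?p ! i)"
      then show ?thesis using i mem nl[of "?p ! i"] by (auto simp: insert_commute)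
    next
      assume h: "?p ! Suc i \<noteq> r \<and> ?p ! i = par (?p ! Suc i)"
      then show ?thesis using i mem nl[of "?p ! Suc i"] by auto
    qed
  next
    fix e assume "e \<in> {{par z, z} |z. z \<in> set ?p \<and> z \<noteq> ?l}"
    then obtain z where z: "e = {par z, z}" "z \<in> set ?p" "z \<noteq> ?l" by auto
    have zV: "z \<in> V" using path_V[OF p aV] z by auto
    have lz: "anc ?l z" using S z by auto
    have zr: "z \<noteq> r"
    proof
      assume "z = r"
      then have "dep ?l = 0" using anc_dep[OF lz] dep_root by simp
      then have "?l = r" using dep0 lz anc_V by auto
      then show False using z \<open>z = r\<close> by simp
    qed
    have "anc ?l (par z)" using par(6)[OF zV zr lz] z(3) by simp
    moreover have "anc (par z) a \<or> anc (par z) b" using S z par(1)[OF zV zr] anc_trans by blast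
    ultimately have pz: "par z \<in> set ?p" using S by simp
    obtain i where i: "i < length ?p" "?p ! i = par z" using pz by (auto simp: in_set_conv_nth)
    obtain j where j: "j < length ?p" "?p ! j = z" using z(2) by (auto simp: in_set_conv_nth)
    have eE: "{par z, z} \<in> E" using par(4)[OF zV zr] .
    have "i \<noteq> j" using i j par(5)[OF zV zr] by auto
    then show "e \<in> {{?p ! i, ?p ! Suc i} |i. Suc i < length ?p}"
    proof (cases "i < j")
      case True
      then have "j = Suc i" using path_adj[OF p True j(1)] eE i j by simp
      then have "e = {?p ! i, ?p ! Suc i}" "Suc i < length ?p" using z i j by auto
      then show ?thesis by blast
    next
      case False
      then have "j < i" using \<open>i \<noteq> j\<close> by simp
      then have "i = Suc j" using path_adj[OF p \<open>j < i\<close> i(1)] eE i j by (simp add: insert_commute)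
      then have "e = {?p ! j, ?p ! Suc j}" "Suc j < length ?p" using z i j by (auto simp: insert_commute)
      then show ?thesis by blast
    qed
  qed
qed

end


context rtree begin

lemma link_verts_char: assumes aV: "a \<in> V" and bV: "b \<in> V"
  shows "link_verts E {a, b} = {x. anc (lca a b) x \<and> (anc x a \<or> anc x b)}"
proof -
  let ?S = "{x. anc (lca a b) x \<and> (anc x a \<or> anc x b)}"
  have s1: "set (tree_path E a b) = ?S" using tp_char(2)[OF aV bV] .
  have s2: "set (tree_path E b a) = ?S" using tp_char(2)[OF bV aV] lca_comm[OF aV bV] by auto
  have "{set (tree_path E a' b') |a' b'. {a, b} = {a', b'}} = {?S}"
  proof (intro equalityI subsetI)
    fix X assume "X \<in> {set (tree_path E a' b') |a' b'. {a, b} = {a', b'}}"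
    then obtain a' b' where "X = set (tree_path E a' b')" "{a, b} = {a', b'}" by auto
    then show "X \<in> {?S}" using s1 s2 by (auto simp: doubleton_eq_iff)
  next
    fix X assume "X \<in> {?S}"
    then have "X = set (tree_path E a b)" using s1 by simp
    then show "X \<in> {set (tree_path E a' b') |a' b'. {a, b} = {a', b'}}" by blast
  qed
  then show ?thesis unfolding link_verts_def by simp
qed

lemma link_edges_char: assumes aV: "a \<in> V" and bV: "b \<in> V"
  shows "link_edges E {a, b} = {{par z, z} | z. z \<in> {x. anc (lca a b) x \<and> (anc x a \<or> anc x b)} \<and> z \<noteq> lca a b}"
proof -
  let ?S = "{x. anc (lca a b) x \<and> (anc x a \<or> anc x b)}"
  let ?T = "{{par z, z} | z. z \<in> ?S \<and> z \<noteq> lca a b}"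
  have s1: "path_edges (tree_path E a b) = ?T" using tp_edges[OF aV bV] tp_char(2)[OF aV bV] by simp
  have s2: "path_edges (tree_path E b a) = ?T" using tp_edges[OF bV aV] tp_char(2)[OF bV aV] lca_comm[OF aV bV]
    by (simp add: disj_commute)
  have "{path_edges (tree_path E a' b') |a' b'. {a, b} = {a', b'}} = {?T}"
  proof (intro equalityI subsetI)
    fix X assume "X \<in> {path_edges (tree_path E a' b') |a' b'. {a, b} = {a', b'}}"
    then obtain a' b' where "X = path_edges (tree_path E a' b')" "{a, b} = {a', b'}" by auto
    then show "X \<in> {?T}" using s1 s2 by (auto simp: doubleton_eq_iff)
  next
    fix X assume "X \<in> {?T}"
    then have "X = path_edges (tree_path E a b)" using s1 by simp
    then show "X \<in> {path_edges (tree_path E a' b') |a' b'. {a, b} = {a', b'}}" by blast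
  qed
  then show ?thesis unfolding link_edges_def by simp
qed

lemma path_edges_E: assumes "is_path E p u v" shows "path_edges p \<subseteq> E"
  using assms unfolding path_edges_def is_path_def by auto

end

locale setting = rtree V E r for V :: "'a set" and E r +
  fixes L :: "'a set set" and w :: "'a set \<Rightarrow> real" and F U :: "'a set set"
  assumes inst: "wtap_instance V E L w" and sol: "wtap_solution E L F" and UL: "U \<subseteq> L"
    and up: "\<forall>u\<in>U. is_up_link E r u"
    and disj: "\<forall>u\<in>U. \<forall>u'\<in>U. u \<noteq> u' \<longrightarrow> link_edges E u \<inter> link_edges E u' = {}"
begin

lemma Lsub: "L \<subseteq> {{a, b} | a b. a \<in> V \<and> b \<in> V \<and> a \<noteq> b}" using inst unfolding wtap_instance_def by auto
lemma wpos: "l \<in> L \<Longrightarrow> w l > 0" using inst unfolding wtap_instance_def by auto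
lemma FL: "F \<subseteq> L" using sol unfolding wtap_solution_def by auto
lemma Fcov: "(\<Union>l\<in>F. link_edges E l) = E" using sol unfolding wtap_solution_def by auto

lemma finL: "finite L"
proof -
  have "L \<subseteq> Pow V" using Lsub by auto
  then show ?thesis using finV finite_subset by (metis finite_Pow_iff)
qed
lemma finF: "finite F" using finL FL finite_subset by blast
lemma finU: "finite U" using finL UL finite_subset by blast

definition LV where "LV l = link_verts E l"
definition ends where "ends l = (SOME p. l = {fst p, snd p} \<and> fst p \<in> V \<and> snd p \<in> V \<and> fst p \<noteq> snd p)"
definition ap where "ap l = lca (fst (ends l)) (snd (ends l))"
definition LE where "LE l = LV l - {ap l}"

lemma ends: assumes "l \<in> L"
  shows "l = {fst (ends l), snd (ends l)}" "fst (ends l) \<in> V" "snd (ends l) \<in> V" "fst (ends l) \<noteq> snd (ends l)"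
proof -
  have "\<exists>p. l = {fst p, snd p} \<and> fst p \<in> V \<and> snd p \<in> V \<and> fst p \<noteq> snd p"
    using assms Lsub by fastforce
  then have "l = {fst (ends l), snd (ends l)} \<and> fst (ends l) \<in> V \<and> snd (ends l) \<in> V \<and> fst (ends l) \<noteq> snd (ends l)"
    unfolding ends_def by (rule someI_ex)
  then show "l = {fst (ends l), snd (ends l)}" "fst (ends l) \<in> V" "snd (ends l) \<in> V" "fst (ends l) \<noteq> snd (ends l)"
    by auto
qed

lemma LV_char: assumes "l \<in> L"
  shows "LV l = {x. anc (ap l) x \<and> (anc x (fst (ends l)) \<or> anc x (snd (ends l)))}"
  unfolding LV_def ap_def using link_verts_char[OF ends(2,3)[OF assms]] ends(1)[OF assms] by simp

lemma LE_edges: assumes "l \<in> L" shows "link_edges E l = (\<lambda>z. {par z, z}) ` LE l"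
proof -
  have "link_edges E l = {{par z, z} | z. z \<in> LV l \<and> z \<noteq> ap l}"
    using link_edges_char[OF ends(2,3)[OF assms]] ends(1)[OF assms] LV_char[OF assms]
    unfolding ap_def by simp
  then show ?thesis unfolding LE_def by auto
qed

lemma K1: "l \<in> L \<Longrightarrow> x \<in> LV l \<Longrightarrow> anc (ap l) x" using LV_char by auto

lemma ap_in: assumes "l \<in> L" shows "ap l \<in> LV l"
proof -
  have "anc (ap l) (fst (ends l))" unfolding ap_def using lca(1) ends[OF assms] by simp
  then have "anc (ap l) (ap l)" using anc_V anc_refl by blast
  then show ?thesis using LV_char[OF assms] \<open>anc (ap l) (fst (ends l))\<close> by simp
qed

lemma K2: assumes "l \<in> L" "x \<in> LV l" "anc (ap l) y" "anc y x" shows "y \<in> LV l"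
  using assms LV_char[OF assms(1)] anc_trans by auto

lemma LV_V: "l \<in> L \<Longrightarrow> LV l \<subseteq> V" using K1 anc_V by blast

lemma LE_nr: assumes "l \<in> L" "z \<in> LE l" shows "z \<in> V" "z \<noteq> r"
proof -
  show "z \<in> V" using assms LV_V unfolding LE_def by auto
  show "z \<noteq> r"
  proof
    assume "z = r"
    have "anc (ap l) z" using K1 assms unfolding LE_def by auto
    then have "dep (ap l) = 0" using \<open>z = r\<close> anc_dep dep_root by fastforce
    then have "ap l = r" using dep0 anc_V \<open>anc (ap l) z\<close> by blast
    then show False using assms \<open>z = r\<close> unfolding LE_def by simp
  qed
qed

definition tb where "tb u = (SOME p. u = {fst p, snd p} \<and> anc (fst p) (snd p) \<and> fst p \<noteq> snd p)"
definition t where "t u = fst (tb u)"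
definition b where "b u = snd (tb u)"

lemma U_tb: assumes u: "u \<in> U" shows "u = {t u, b u}" "anc (t u) (b u)" "t u \<noteq> b u"
proof -
  obtain a c where ac: "u = {a, c}" "a \<in> set (tree_path E r c)" using up u unfolding is_up_link_def by auto
  have "u \<in> L" using u UL by auto
  then obtain x y where "u = {x, y}" "x \<in> V" "y \<in> V" "x \<noteq> y" using Lsub by auto
  then have "a \<noteq> c" "c \<in> V" using ac by (auto simp: doubleton_eq_iff)
  then have "anc a c" using ac unfolding anc_def rp_def by simp
  then have "\<exists>p. u = {fst p, snd p} \<and> anc (fst p) (snd p) \<and> fst p \<noteq> snd p" using ac \<open>a \<noteq> c\<close> by auto
  then have "u = {fst (tb u), snd (tb u)} \<and> anc (fst (tb u)) (snd (tb u)) \<and> fst (tb u) \<noteq> snd (tb u)"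
    unfolding tb_def by (rule someI_ex)
  then show "u = {t u, b u}" "anc (t u) (b u)" "t u \<noteq> b u" unfolding t_def b_def by auto
qed

lemma U_L: "u \<in> U \<Longrightarrow> u \<in> L" using UL by auto

lemma U_ap: assumes u: "u \<in> U" shows "ap u = t u"
proof -
  have tV: "t u \<in> V" and bV: "b u \<in> V" using anc_V U_tb[OF u] by auto
  have l1: "lca (t u) (b u) = t u" using lca_anc[OF tV U_tb(2)[OF u]] .
  have "{fst (ends u), snd (ends u)} = {t u, b u}" using ends(1)[OF U_L[OF u]] U_tb(1)[OF u] by simp
  then have "(fst (ends u) = t u \<and> snd (ends u) = b u) \<or> (fst (ends u) = b u \<and> snd (ends u) = t u)"
    by (auto simp: doubleton_eq_iff)
  then show ?thesis unfolding ap_def using l1 lca_comm[OF tV bV] by auto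
qed

lemma U_LV: assumes u: "u \<in> U" shows "LV u = {x. anc (t u) x \<and> anc x (b u)}"
proof -
  have tV: "t u \<in> V" and bV: "b u \<in> V" using anc_V U_tb[OF u] by auto
  have "LV u = {x. anc (lca (t u) (b u)) x \<and> (anc x (t u) \<or> anc x (b u))}"
    unfolding LV_def using link_verts_char[OF tV bV] U_tb(1)[OF u] by simp
  also have "\<dots> = {x. anc (t u) x \<and> anc x (b u)}"
  proof -
    have "\<And>x. anc (t u) x \<Longrightarrow> anc x (t u) \<Longrightarrow> anc x (b u)" using anc_trans U_tb(2)[OF u] by blast
    then show ?thesis using lca_anc[OF tV U_tb(2)[OF u]] by auto
  qed
  finally show ?thesis .
qed

lemma U_LE: assumes u: "u \<in> U" shows "LE u = {x. anc (t u) x \<and> anc x (b u) \<and> x \<noteq> t u}"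
  using U_LV[OF u] U_ap[OF u] unfolding LE_def by auto

lemma cover_iff: assumes u: "u \<in> U" and C: "C \<subseteq> L"
  shows "link_edges E u \<subseteq> (\<Union>l\<in>C. link_edges E l) \<longleftrightarrow> LE u \<subseteq> (\<Union>l\<in>C. LE l)"
proof
  assume h: "link_edges E u \<subseteq> (\<Union>l\<in>C. link_edges E l)"
  show "LE u \<subseteq> (\<Union>l\<in>C. LE l)"
  proof
    fix z assume z: "z \<in> LE u"
    then have "{par z, z} \<in> link_edges E u" using LE_edges[OF U_L[OF u]] by auto
    then obtain l z' where l: "l \<in> C" "z' \<in> LE l" "{par z, z} = {par z', z'}"
      using h LE_edges C by (auto simp: subset_iff)
    have "z = z'" using par_inj LE_nr[OF U_L[OF u] z] LE_nr l C by blast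
    then show "z \<in> (\<Union>l\<in>C. LE l)" using l by auto
  qed
next
  assume h: "LE u \<subseteq> (\<Union>l\<in>C. LE l)"
  show "link_edges E u \<subseteq> (\<Union>l\<in>C. link_edges E l)"
  proof
    fix e assume "e \<in> link_edges E u"
    then obtain z where z: "z \<in> LE u" "e = {par z, z}" using LE_edges[OF U_L[OF u]] by auto
    then obtain l where l: "l \<in> C" "z \<in> LE l" using h by auto
    then have "e \<in> link_edges E l" using LE_edges[of l] C z by auto
    then show "e \<in> (\<Union>l\<in>C. link_edges E l)" using l by auto
  qed
qed

lemma U_disj: assumes "u \<in> U" "u' \<in> U" "u \<noteq> u'" shows "LE u \<inter> LE u' = {}"
proof -
  have "link_edges E u \<inter> link_edges E u' = {}" using disj assms by auto
  then show ?thesis using LE_edges[OF U_L[OF assms(1)]] LE_edges[OF U_L[OF assms(2)]] by auto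
qed

lemma F_cov: assumes u: "u \<in> U" and z: "z \<in> LE u" shows "\<exists>l\<in>F. z \<in> LE l"
proof -
  have tV: "t u \<in> V" and bV: "b u \<in> V" using anc_V U_tb[OF u] by auto
  have "link_edges E u \<subseteq> E"
  proof -
    have "link_edges E u = \<Union>{path_edges (tree_path E a' b') |a' b'. u = {a', b'}}" unfolding link_edges_def ..
    moreover have "\<And>a' b'. u = {a', b'} \<Longrightarrow> path_edges (tree_path E a' b') \<subseteq> E"
    proof -
      fix a' b' assume "u = {a', b'}"
      then have "a' \<in> V" "b' \<in> V" using tV bV U_tb(1)[OF u] by (auto simp: doubleton_eq_iff)
      then show "path_edges (tree_path E a' b') \<subseteq> E" using path_edges_E tp_path by blast
    qed
    ultimately show ?thesis by blast
  qed
  moreover have "{par z, z} \<in> link_edges E u" using LE_edges[OF U_L[OF u]] z by auto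
  ultimately have "{par z, z} \<in> (\<Union>l\<in>F. link_edges E l)" using Fcov by auto
  then obtain l where l0: "l \<in> F" "{par z, z} \<in> link_edges E l" by auto
  moreover have "l \<in> L" using l0 FL by auto
  ultimately have "{par z, z} \<in> (\<lambda>z. {par z, z}) ` LE l" using LE_edges by simp
  then obtain z' where "z' \<in> LE l" "{par z, z} = {par z', z'}" by auto
  note l = l0(1) this
  have "z = z'" using par_inj LE_nr[OF U_L[OF u] z] LE_nr l FL by blast
  then show ?thesis using l by auto
qed

end


definition cvx :: "nat set \<Rightarrow> bool" where
  "cvx X \<longleftrightarrow> (\<forall>x y z. x \<in> X \<longrightarrow> z \<in> X \<longrightarrow> x \<le> y \<longrightarrow> y \<le> z \<longrightarrow> y \<in> X)"

definition ecov :: "('l \<Rightarrow> nat set) \<Rightarrow> 'l \<Rightarrow> nat \<Rightarrow> bool" where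
  "ecov J l d \<longleftrightarrow> d - 1 \<in> J l \<and> d \<in> J l"

definition covs :: "('l \<Rightarrow> nat set) \<Rightarrow> nat \<Rightarrow> nat \<Rightarrow> 'l set \<Rightarrow> bool" where
  "covs J lo hi S \<longleftrightarrow> (\<forall>d. lo < d \<and> d \<le> hi \<longrightarrow> (\<exists>l\<in>S. ecov J l d))"

lemma cvxD: "cvx X \<Longrightarrow> x \<in> X \<Longrightarrow> z \<in> X \<Longrightarrow> x \<le> y \<Longrightarrow> y \<le> z \<Longrightarrow> y \<in> X"
  unfolding cvx_def by blast

locale icov =
  fixes J :: "'l \<Rightarrow> nat set" and lo hi :: nat and F :: "'l set" and g :: "'l \<Rightarrow> nat"
  assumes finF: "finite F" and cvxF: "\<And>l. l \<in> F \<Longrightarrow> cvx (J l)"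
    and subF: "\<And>l. l \<in> F \<Longrightarrow> J l \<subseteq> {lo..hi}"
    and covF: "covs J lo hi F" and lohi: "lo < hi"
begin

definition "Cov = {S. S \<subseteq> F \<and> covs J lo hi S}"
definition "mc = Min (card ` Cov)"
definition "MC = {S \<in> Cov. card S = mc}"
definition "topl S = (THE l. l \<in> S \<and> ecov J l (Suc lo))"
definition "best = (SOME S. S \<in> MC \<and> (\<forall>S'\<in>MC. g (topl S') \<le> g (topl S)))"

lemma finCov: "finite Cov" unfolding Cov_def using finF by simp
lemma FCov: "F \<in> Cov" unfolding Cov_def using covF by simp

lemma MC_ne: "MC \<noteq> {}"
proof -
  have "mc \<in> card ` Cov" unfolding mc_def using finCov FCov by (intro Min_in) auto
  then show ?thesis unfolding MC_def by auto
qed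

lemma MC_min: "S \<in> MC \<Longrightarrow> S' \<subseteq> F \<Longrightarrow> covs J lo hi S' \<Longrightarrow> card S \<le> card S'"
  unfolding MC_def mc_def using finCov by (auto simp: Cov_def)

lemma MC_cov: "S \<in> MC \<Longrightarrow> S \<subseteq> F \<and> covs J lo hi S" unfolding MC_def Cov_def by auto

lemma MC_fin: "S \<in> MC \<Longrightarrow> finite S" using MC_cov finF finite_subset by blast

lemma MC_private:
  assumes S: "S \<in> MC" and l: "l \<in> S"
  shows "\<exists>d. lo < d \<and> d \<le> hi \<and> ecov J l d \<and> (\<forall>l'\<in>S. l' \<noteq> l \<longrightarrow> \<not> ecov J l' d)"
proof (rule ccontr)
  assume "\<not> ?thesis"
  then have "covs J lo hi (S - {l})" using MC_cov[OF S] unfolding covs_def by blast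
  moreover have "S - {l} \<subseteq> F" using MC_cov[OF S] by auto
  ultimately have "card S \<le> card (S - {l})" using MC_min[OF S] by blast
  moreover have "card (S - {l}) < card S" by (rule card_Diff1_less[OF MC_fin[OF S] l])
  ultimately show False by simp
qed

definition "pe S l = (SOME d. lo < d \<and> d \<le> hi \<and> ecov J l d \<and> (\<forall>l'\<in>S. l' \<noteq> l \<longrightarrow> \<not> ecov J l' d))"

lemma pe: assumes "S \<in> MC" "l \<in> S"
  shows "lo < pe S l" "pe S l \<le> hi" "ecov J l (pe S l)" "\<And>l'. l' \<in> S \<Longrightarrow> l' \<noteq> l \<Longrightarrow> \<not> ecov J l' (pe S l)"
  using someI_ex[OF MC_private[OF assms]] unfolding pe_def by blast+

lemma cvx_mem: "S \<in> MC \<Longrightarrow> l \<in> S \<Longrightarrow> cvx (J l)" using MC_cov cvxF by blast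

lemma PW:
  assumes S: "S \<in> MC" and A: "A \<in> S" and B: "B \<in> S" and AB: "A \<noteq> B"
    and qA: "q \<in> J A" and qB: "q \<in> J B"
  shows "(pe S A \<le> q) \<noteq> (pe S B \<le> q)"
proof -
  have key: "\<not> (pe S A \<le> q \<and> pe S B \<le> q \<and> pe S A \<le> pe S B)" if
    A: "A \<in> S" and B: "B \<in> S" and AB: "A \<noteq> B" and qA: "q \<in> J A" for A B
  proof
    assume h: "pe S A \<le> q \<and> pe S B \<le> q \<and> pe S A \<le> pe S B"
    let ?a = "pe S A" and ?b = "pe S B"
    have "?a - 1 \<in> J A" using pe(3)[OF S A] unfolding ecov_def by simp
    moreover have "lo < ?b" using pe(1)[OF S B] .
    note c = cvxD[OF cvx_mem[OF S A] \<open>?a - 1 \<in> J A\<close> qA]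
    have "?b - 1 \<in> J A" using h by (intro c) auto
    moreover have "?b \<in> J A" using h \<open>lo < ?b\<close> by (intro c) auto
    ultimately have "?b - 1 \<in> J A" "?b \<in> J A" by auto
    then have "ecov J A ?b" unfolding ecov_def by simp
    then show False using pe(4)[OF S B A AB] by simp
  qed
  have key2: "\<not> (q < pe S A \<and> q < pe S B \<and> pe S B \<le> pe S A)" if
    A: "A \<in> S" and B: "B \<in> S" and AB: "A \<noteq> B" and qA: "q \<in> J A" for A B
  proof
    assume h: "q < pe S A \<and> q < pe S B \<and> pe S B \<le> pe S A"
    let ?a = "pe S A" and ?b = "pe S B"
    have "?a \<in> J A" using pe(3)[OF S A] unfolding ecov_def by simp
    note c = cvxD[OF cvx_mem[OF S A] qA \<open>?a \<in> J A\<close>]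
    have "?b - 1 \<in> J A" using h by (intro c) auto
    moreover have "?b \<in> J A" using h by (intro c) auto
    ultimately have "?b - 1 \<in> J A" "?b \<in> J A" by auto
    then have "ecov J A ?b" unfolding ecov_def by simp
    then show False using pe(4)[OF S B A AB] by simp
  qed
  show ?thesis
    using key[OF A B AB qA] key[OF B A AB[symmetric] qB] key2[OF A B AB qA] key2[OF B A AB[symmetric] qB]
    by linarith
qed

lemma MC_le2: assumes S: "S \<in> MC" shows "card {l\<in>S. q \<in> J l} \<le> 2"
proof (rule ccontr)
  assume "\<not> ?thesis"
  then have "3 \<le> card {l\<in>S. q \<in> J l}" by simp
  then obtain X where X: "X \<subseteq> {l\<in>S. q \<in> J l}" "card X = 3"
    by (rule obtain_subset_with_card_n)
  then obtain A B C where ABC: "X = {A, B, C}" "A \<noteq> B" "A \<noteq> C" "B \<noteq> C"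
    by (auto simp: card_3_iff)
  have m: "A \<in> S" "B \<in> S" "C \<in> S" "q \<in> J A" "q \<in> J B" "q \<in> J C" using X ABC by auto
  have "(pe S A \<le> q) \<noteq> (pe S B \<le> q)" "(pe S A \<le> q) \<noteq> (pe S C \<le> q)" "(pe S B \<le> q) \<noteq> (pe S C \<le> q)"
    using PW[OF S m(1,2) ABC(2) m(4,5)] PW[OF S m(1,3) ABC(3) m(4,6)] PW[OF S m(2,3) ABC(4) m(5,6)] by auto
  then show False by argo
qed

lemma MC_top_ex: assumes S: "S \<in> MC" shows "\<exists>l\<in>S. ecov J l (Suc lo)"
  using MC_cov[OF S] lohi unfolding covs_def by auto

lemma MC_top_uniq: assumes S: "S \<in> MC" and A: "A \<in> S" "ecov J A (Suc lo)" and B: "B \<in> S" "ecov J B (Suc lo)"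
  shows "A = B"
proof (rule ccontr)
  assume AB: "A \<noteq> B"
  have "lo \<in> J A" "lo \<in> J B" using A B unfolding ecov_def by auto
  from PW[OF S A(1) B(1) AB this] show False using pe(1)[OF S A(1)] pe(1)[OF S B(1)] by simp
qed

lemma topl: assumes S: "S \<in> MC" shows "topl S \<in> S" "ecov J (topl S) (Suc lo)"
proof -
  have "\<exists>!l. l \<in> S \<and> ecov J l (Suc lo)" using MC_top_ex[OF S] MC_top_uniq[OF S] by blast
  then have "topl S \<in> S \<and> ecov J (topl S) (Suc lo)" unfolding topl_def by (rule theI')
  then show "topl S \<in> S" "ecov J (topl S) (Suc lo)" by auto
qed

lemma topl_eq: "S \<in> MC \<Longrightarrow> l \<in> S \<Longrightarrow> ecov J l (Suc lo) \<Longrightarrow> topl S = l"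
  using topl MC_top_uniq by blast

lemma best: "best \<in> MC" "\<And>S'. S' \<in> MC \<Longrightarrow> g (topl S') \<le> g (topl best)"
proof -
  have fin: "finite MC" using finCov unfolding MC_def by simp
  let ?m = "Max ((\<lambda>S. g (topl S)) ` MC)"
  have "?m \<in> (\<lambda>S. g (topl S)) ` MC" using fin MC_ne by (intro Max_in) auto
  then obtain S0 where S0: "S0 \<in> MC" "g (topl S0) = ?m" by auto
  have "\<forall>S'\<in>MC. g (topl S') \<le> g (topl S0)" using S0 fin by auto
  then have "\<exists>S. S \<in> MC \<and> (\<forall>S'\<in>MC. g (topl S') \<le> g (topl S))" using S0 by blast
  then have "best \<in> MC \<and> (\<forall>S'\<in>MC. g (topl S') \<le> g (topl best))" unfolding best_def by (rule someI_ex)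
  then show "best \<in> MC" "\<And>S'. S' \<in> MC \<Longrightarrow> g (topl S') \<le> g (topl best)" by auto
qed

lemma inner_lo: assumes S: "S \<in> MC" and A: "A \<in> S" "A \<noteq> topl S"
  shows "lo \<notin> J A"
proof
  assume lo: "lo \<in> J A"
  have pa: "pe S A \<in> J A" using pe(3)[OF S A(1)] unfolding ecov_def by simp
  have "Suc lo \<in> J A" using pe(1)[OF S A(1)] by (intro cvxD[OF cvx_mem[OF S A(1)] lo pa]) auto
  then have "ecov J A (Suc lo)" using lo unfolding ecov_def by simp
  then show False using topl_eq[OF S A(1)] A(2) by simp
qed

lemma inner_le1:
  assumes iF: "\<iota> \<in> F" and iq: "{lo..q} \<subseteq> J \<iota>"
  shows "card {l\<in>best. l \<noteq> topl best \<and> q \<in> J l} \<le> 1"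
proof (rule ccontr)
  let ?S = best and ?t = "topl best"
  have S: "?S \<in> MC" using best(1) .
  assume "\<not> ?thesis"
  then have "2 \<le> card {l\<in>?S. l \<noteq> ?t \<and> q \<in> J l}" by simp
  then obtain X where X: "X \<subseteq> {l\<in>?S. l \<noteq> ?t \<and> q \<in> J l}" "card X = 2"
    by (rule obtain_subset_with_card_n)
  from X(2) obtain A0 B0 where AB0: "X = {A0, B0}" "A0 \<noteq> B0" unfolding card_2_iff by blast
  have "A0 \<in> X" "B0 \<in> X" using AB0 by auto
  then have m0: "A0 \<in> ?S" "B0 \<in> ?S" "q \<in> J A0" "q \<in> J B0" "A0 \<noteq> ?t" "B0 \<noteq> ?t" using X(1) by blast+
  have "\<exists>A B. A \<in> ?S \<and> B \<in> ?S \<and> q \<in> J A \<and> q \<in> J B \<and> A \<noteq> ?t \<and> B \<noteq> ?t \<and> A \<noteq> B \<and> pe ?S A \<le> q \<and> \<not> pe ?S B \<le> q"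
  proof (cases "pe ?S A0 \<le> q")
    case True
    then have "\<not> pe ?S B0 \<le> q" using PW[OF S m0(1,2) AB0(2) m0(3,4)] by simp
    then show ?thesis using True m0 AB0 by blast
  next
    case False
    then have "pe ?S B0 \<le> q" using PW[OF S m0(1,2) AB0(2) m0(3,4)] by simp
    then show ?thesis using False m0 AB0 by blast
  qed
  then obtain A B where m: "A \<in> ?S" "B \<in> ?S" "q \<in> J A" "q \<in> J B" "A \<noteq> ?t" "B \<noteq> ?t" "A \<noteq> B"
    and sA: "pe ?S A \<le> q" and sB: "q < pe ?S B" by auto
  have tS: "?t \<in> ?S" and tc: "ecov J ?t (Suc lo)" using topl[OF S] by auto
  have lot: "lo \<in> J ?t" using tc unfolding ecov_def by simp
  let ?S' = "(?S - {?t, A}) \<union> {\<iota>}"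
  have cov: "covs J lo hi ?S'" unfolding covs_def
  proof (intro allI impI)
    fix d assume d: "lo < d \<and> d \<le> hi"
    show "\<exists>l\<in>?S'. ecov J l d"
    proof (cases "d \<le> q")
      case True
      then have "d - 1 \<in> {lo..q}" "d \<in> {lo..q}" using d by auto
      then have "ecov J \<iota> d" using iq unfolding ecov_def by blast
      then show ?thesis by auto
    next
      case False
      obtain l where l: "l \<in> ?S" "ecov J l d" using MC_cov[OF S] d unfolding covs_def by auto
      show ?thesis
      proof (cases "l \<in> {?t, A}")
        case False then show ?thesis using l by auto
      next
        case True
        then show ?thesis
        proof
          assume lt: "l = ?t"
          let ?a = "pe ?S A"
          have dt: "d \<in> J ?t" using l lt unfolding ecov_def by simp
          note c = cvxD[OF cvx_mem[OF S tS] lot dt]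
          have "?a - 1 \<in> J ?t" using False sA pe(1)[OF S m(1)] by (intro c) auto
          moreover have "?a \<in> J ?t" using False sA pe(1)[OF S m(1)] by (intro c) auto
          ultimately have "?a - 1 \<in> J ?t" "?a \<in> J ?t" by auto
          then have "ecov J ?t ?a" unfolding ecov_def by simp
          then show ?thesis using pe(4)[OF S m(1) tS] m(5) by auto
        next
          assume "l \<in> {A}"
          then have lA: "l = A" by simp
          let ?b = "pe ?S B"
          show ?thesis
          proof (cases "d \<le> ?b")
            case True
            have "?b \<in> J B" using pe(3)[OF S m(2)] unfolding ecov_def by simp
            note c = cvxD[OF cvx_mem[OF S m(2)] m(4) \<open>?b \<in> J B\<close>]
            have "d - 1 \<in> J B" using False True by (intro c) auto
            moreover have "d \<in> J B" using False True by (intro c) auto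
            ultimately have "d - 1 \<in> J B" "d \<in> J B" by auto
            then show ?thesis using m unfolding ecov_def by auto
          next
            case False2: False
            have "d \<in> J A" using l lA unfolding ecov_def by simp
            note c = cvxD[OF cvx_mem[OF S m(1)] m(3) \<open>d \<in> J A\<close>]
            have "?b - 1 \<in> J A" using sB False2 by (intro c) auto
            moreover have "?b \<in> J A" using sB False2 by (intro c) auto
            ultimately have "?b - 1 \<in> J A" "?b \<in> J A" by auto
            then have "ecov J A ?b" unfolding ecov_def by simp
            then show ?thesis using pe(4)[OF S m(2) m(1)] m(7) by auto
          qed
        qed
      qed
    qed
  qed
  have sub: "?S' \<subseteq> F" using MC_cov[OF S] iF by auto
  have "card (?S - {?t, A}) = card ?S - 2" using tS m(1) m(5) MC_fin[OF S] by (simp add: card_Diff_subset)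
  moreover have "card ?S' \<le> card (?S - {?t, A}) + 1" using card_Un_le[of "?S - {?t, A}" "{\<iota>}"] by simp
  ultimately have "card ?S' \<le> card ?S - 2 + 1" by simp
  moreover have "2 \<le> card ?S"
  proof -
    have "{?t, A} \<subseteq> ?S" using tS m(1) by auto
    then have "card {?t, A} \<le> card ?S" using MC_fin[OF S] by (rule card_mono[rotated])
    then show ?thesis using m(5) by simp
  qed
  ultimately have "card ?S' < card ?S" by simp
  moreover have "card ?S \<le> card ?S'" using MC_min[OF S sub cov] .
  ultimately show False by simp
qed

lemma inner_g:
  assumes iF: "\<iota> \<in> F" and iq: "{lo..q} \<subseteq> J \<iota>" and A: "A \<in> best" "A \<noteq> topl best" "q \<in> J A"
  shows "g \<iota> \<le> g (topl best)"
proof -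
  let ?S = best and ?t = "topl best"
  have S: "?S \<in> MC" using best(1) .
  have tS: "?t \<in> ?S" and tc: "ecov J ?t (Suc lo)" using topl[OF S] by auto
  have lot: "lo \<in> J ?t" using tc unfolding ecov_def by simp
  have AF: "A \<in> F" using MC_cov[OF S] A(1) by auto
  have "q \<in> {lo..hi}" using subF[OF AF] A(3) by auto
  then have qlo: "lo < q" using inner_lo[OF S A(1,2)] A(3) by (cases "q = lo") auto
  let ?S' = "(?S - {?t}) \<union> {\<iota>}"
  have cov: "covs J lo hi ?S'" unfolding covs_def
  proof (intro allI impI)
    fix d assume d: "lo < d \<and> d \<le> hi"
    show "\<exists>l\<in>?S'. ecov J l d"
    proof (cases "d \<le> q")
      case True
      then have "d - 1 \<in> {lo..q}" "d \<in> {lo..q}" using d by auto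
      then have "ecov J \<iota> d" using iq unfolding ecov_def by blast
      then show ?thesis by auto
    next
      case False
      obtain l where l: "l \<in> ?S" "ecov J l d" using MC_cov[OF S] d unfolding covs_def by auto
      show ?thesis
      proof (cases "l = ?t")
        case False then show ?thesis using l by auto
      next
        case True
        let ?a = "pe ?S A"
        have dJ: "d \<in> J ?t" using l True unfolding ecov_def by simp
        show ?thesis
        proof (cases "?a \<le> d")
          case True
          note c = cvxD[OF cvx_mem[OF S tS] lot dJ]
          have "?a - 1 \<in> J ?t" using True pe(1)[OF S A(1)] by (intro c) auto
          moreover have "?a \<in> J ?t" using True pe(1)[OF S A(1)] by (intro c) auto
          ultimately have "?a - 1 \<in> J ?t" "?a \<in> J ?t" by auto
          then have "ecov J ?t ?a" unfolding ecov_def by simp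
          then show ?thesis using pe(4)[OF S A(1) tS] A(2) by auto
        next
          case False2: False
          have "?a \<in> J A" using pe(3)[OF S A(1)] unfolding ecov_def by simp
          note c = cvxD[OF cvx_mem[OF S A(1)] A(3) \<open>?a \<in> J A\<close>]
          have "d - 1 \<in> J A" using False False2 by (intro c) auto
          moreover have "d \<in> J A" using False False2 by (intro c) auto
          ultimately have "d - 1 \<in> J A" "d \<in> J A" by auto
          then show ?thesis using A unfolding ecov_def by auto
        qed
      qed
    qed
  qed
  have sub: "?S' \<subseteq> F" using MC_cov[OF S] iF by auto
  have "card ?S' \<le> card (?S - {?t}) + 1" by (use card_Un_le[of _ "{\<iota>}"] in simp)
  also have "\<dots> = card ?S"
  proof -
    have "card (?S - {?t}) = card ?S - 1" using tS MC_fin[OF S] by simp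
    moreover have "0 < card ?S" using tS MC_fin[OF S] card_gt_0_iff by blast
    ultimately show ?thesis by simp
  qed
  finally have c1: "card ?S' \<le> card ?S" .
  have c2: "card ?S \<le> card ?S'" using MC_min[OF S sub cov] .
  have S'MC: "?S' \<in> MC" using c1 c2 S sub cov unfolding MC_def Cov_def by auto
  have "ecov J \<iota> (Suc lo)" using iq qlo unfolding ecov_def by auto
  then have "topl ?S' = \<iota>" using topl_eq[OF S'MC] by auto
  then show ?thesis using best(2)[OF S'MC] by simp
qed

end


context setting begin

definition "Hard = {u \<in> U. \<not> (\<exists>l\<in>F. LE u \<subseteq> LE l)}"
definition "vat u d = rp (b u) ! d"
definition "Ju u l = dep ` (LV u \<inter> LV l)"
definition "lo u = dep (t u)"
definition "hi u = dep (b u)"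
definition "gap l = dep (ap l)"
definition "FS u = icov.best (Ju u) (lo u) (hi u) F gap"
definition "tau u = icov.topl (Ju u) (lo u) (FS u)"
definition "inner u = FS u - {tau u}"

lemma tb_V: "u \<in> U \<Longrightarrow> t u \<in> V \<and> b u \<in> V" using U_tb anc_V by blast

lemma vat: assumes u: "u \<in> U" and d: "lo u \<le> d" "d \<le> hi u"
  shows "vat u d \<in> LV u" "dep (vat u d) = d" "anc (vat u d) (b u)"
proof -
  have bV: "b u \<in> V" using tb_V[OF u] by simp
  show dv: "dep (vat u d) = d" unfolding vat_def using dep_nth[OF bV] d hi_def by simp
  show vb: "anc (vat u d) (b u)" using anc_iff bV dv d hi_def unfolding vat_def by simp
  have "anc (t u) (vat u d)" using anc_chain[OF U_tb(2)[OF u] vb] dv d lo_def by simp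
  then show "vat u d \<in> LV u" using U_LV[OF u] vb by simp
qed

lemma LVu: assumes u: "u \<in> U" and x: "x \<in> LV u"
  shows "vat u (dep x) = x" "lo u \<le> dep x" "dep x \<le> hi u" "anc (t u) x" "anc x (b u)"
proof -
  show tx: "anc (t u) x" and xb: "anc x (b u)" using x U_LV[OF u] by auto
  show "vat u (dep x) = x" using xb anc_iff unfolding vat_def by simp
  show "lo u \<le> dep x" using tx anc_dep lo_def by simp
  show "dep x \<le> hi u" using xb anc_dep hi_def by simp
qed

lemma LVu_anc: assumes u: "u \<in> U" and x: "x \<in> LV u" and y: "y \<in> LV u" and d: "dep y \<le> dep x"
  shows "anc y x"
  using anc_chain[OF LVu(5)[OF u y] LVu(5)[OF u x] d] .

lemma Ju_mem: assumes u: "u \<in> U" and x: "x \<in> LV u"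
  shows "dep x \<in> Ju u l \<longleftrightarrow> x \<in> LV l"
proof
  assume "dep x \<in> Ju u l"
  then obtain y where y: "y \<in> LV u" "y \<in> LV l" "dep y = dep x" unfolding Ju_def by auto
  have "y = x" using LVu(1)[OF u y(1)] LVu(1)[OF u x] y(3) by metis
  then show "x \<in> LV l" using y by simp
next
  assume "x \<in> LV l" then show "dep x \<in> Ju u l" unfolding Ju_def using x by auto
qed

lemma Ju_sub: assumes u: "u \<in> U" shows "Ju u l \<subseteq> {lo u..hi u}"
  unfolding Ju_def using LVu[OF u] by auto

lemma Ju_vat: assumes u: "u \<in> U" and d: "lo u \<le> d" "d \<le> hi u"
  shows "d \<in> Ju u l \<longleftrightarrow> vat u d \<in> LV l"
  using Ju_mem[OF u vat(1)[OF u d]] vat(2)[OF u d] by simp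

lemma Ju_cvx: assumes u: "u \<in> U" and l: "l \<in> L" shows "cvx (Ju u l)"
  unfolding cvx_def
proof (intro allI impI)
  fix x y z assume h: "x \<in> Ju u l" "z \<in> Ju u l" "x \<le> y" "y \<le> z"
  have r: "lo u \<le> x" "z \<le> hi u" using h(1,2) Ju_sub[OF u, of l] by auto
  then have ry: "lo u \<le> y" "y \<le> hi u" using h by auto
  have rx: "lo u \<le> x" "x \<le> hi u" and rz: "lo u \<le> z" "z \<le> hi u" using r h by auto
  have xl: "vat u x \<in> LV l" using Ju_vat[OF u rx] h(1) by simp
  have zl: "vat u z \<in> LV l" using Ju_vat[OF u rz] h(2) by simp
  have a1: "anc (ap l) (vat u x)" using K1[OF l xl] .
  have a2: "anc (vat u x) (vat u y)"
    using LVu_anc[OF u vat(1)[OF u ry] vat(1)[OF u rx]] vat(2)[OF u ry] vat(2)[OF u rx] h by simp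
  have a3: "anc (vat u y) (vat u z)"
    using LVu_anc[OF u vat(1)[OF u rz] vat(1)[OF u ry]] vat(2)[OF u ry] vat(2)[OF u rz] h by simp
  have "vat u y \<in> LV l" using K2[OF l zl anc_trans[OF a1 a2] a3] .
  then show "y \<in> Ju u l" using Ju_vat[OF u ry] by simp
qed

lemma ecov_iff: assumes u: "u \<in> U" and l: "l \<in> L" and d: "lo u < d" "d \<le> hi u"
  shows "ecov (Ju u) l d \<longleftrightarrow> vat u d \<in> LE l"
proof -
  have d1: "lo u \<le> d - 1" "d - 1 \<le> hi u" using d by auto
  have d0: "lo u \<le> d" using d by simp
  have anc1: "anc (vat u (d - 1)) (vat u d)"
    using LVu_anc[OF u vat(1)[OF u d0 d(2)] vat(1)[OF u d1]] vat(2)[OF u d0 d(2)] vat(2)[OF u d1] by simp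
  have ne: "vat u (d - 1) \<noteq> vat u d" using vat(2)[OF u d0 d(2)] vat(2)[OF u d1] d by auto
  show ?thesis
  proof
    assume "ecov (Ju u) l d"
    then have "vat u (d - 1) \<in> LV l" "vat u d \<in> LV l" unfolding ecov_def using Ju_vat[OF u] d1 d0 d(2) by auto
    moreover have "ap l \<noteq> vat u d"
    proof
      assume "ap l = vat u d"
      then have "dep (vat u d) \<le> dep (vat u (d - 1))" using K1[OF l \<open>vat u (d - 1) \<in> LV l\<close>] anc_dep by metis
      then show False using vat(2)[OF u d0 d(2)] vat(2)[OF u d1] d by simp
    qed
    ultimately show "vat u d \<in> LE l" unfolding LE_def by simp
  next
    assume h: "vat u d \<in> LE l"
    then have vl: "vat u d \<in> LV l" and na: "vat u d \<noteq> ap l" unfolding LE_def by auto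
    have a: "anc (ap l) (vat u d)" using K1[OF l vl] .
    have "dep (ap l) < dep (vat u d)" using anc_dep[OF a] anc_eq[OF a] na by fastforce
    then have "dep (ap l) \<le> dep (vat u (d - 1))" using vat(2)[OF u d0 d(2)] vat(2)[OF u d1] by simp
    then have "anc (ap l) (vat u (d - 1))" using anc_chain[OF a anc1] by simp
    then have "vat u (d - 1) \<in> LV l" using K2[OF l vl _ anc1] by simp
    then show "ecov (Ju u) l d" unfolding ecov_def using Ju_vat[OF u] d1 d0 d(2) vl by auto
  qed
qed

lemma LEu_vat: assumes u: "u \<in> U" shows "LE u = {vat u d | d. lo u < d \<and> d \<le> hi u}"
proof (intro equalityI subsetI)
  fix x assume x: "x \<in> LE u"
  then have xl: "x \<in> LV u" and xt: "x \<noteq> t u" using U_LE[OF u] U_LV[OF u] by auto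
  have "lo u < dep x"
  proof -
    have "lo u \<le> dep x" using LVu[OF u xl] by simp
    moreover have "dep x \<noteq> lo u" using xt anc_eq[OF LVu(4)[OF u xl]] lo_def by metis
    ultimately show ?thesis by simp
  qed
  moreover have "x = vat u (dep x)" "dep x \<le> hi u" using LVu[OF u xl] by auto
  ultimately show "x \<in> {vat u d | d. lo u < d \<and> d \<le> hi u}" by blast
next
  fix x assume "x \<in> {vat u d | d. lo u < d \<and> d \<le> hi u}"
  then obtain d where d: "x = vat u d" "lo u < d" "d \<le> hi u" by auto
  have "x \<in> LV u" using vat(1)[OF u] d by simp
  moreover have "x \<noteq> t u"
  proof -
    have "dep x = d" using vat(2)[OF u] d by simp
    then show ?thesis using d(2) lo_def by auto
  qed
  ultimately show "x \<in> LE u" using U_LE[OF u] U_LV[OF u] by auto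
qed

lemma covs_iff: assumes u: "u \<in> U" and S: "S \<subseteq> L"
  shows "covs (Ju u) (lo u) (hi u) S \<longleftrightarrow> LE u \<subseteq> (\<Union>l\<in>S. LE l)"
proof
  assume h: "covs (Ju u) (lo u) (hi u) S"
  show "LE u \<subseteq> (\<Union>l\<in>S. LE l)"
  proof
    fix x assume "x \<in> LE u"
    then obtain d where d: "x = vat u d" "lo u < d" "d \<le> hi u" using LEu_vat[OF u] by auto
    then obtain l where "l \<in> S" "ecov (Ju u) l d" using h unfolding covs_def by auto
    then show "x \<in> (\<Union>l\<in>S. LE l)" using ecov_iff[OF u _ d(2,3)] S d(1) by auto
  qed
next
  assume h: "LE u \<subseteq> (\<Union>l\<in>S. LE l)"
  show "covs (Ju u) (lo u) (hi u) S" unfolding covs_def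
  proof (intro allI impI)
    fix d assume d: "lo u < d \<and> d \<le> hi u"
    then have "vat u d \<in> LE u" using LEu_vat[OF u] by auto
    then obtain l where "l \<in> S" "vat u d \<in> LE l" using h by auto
    then show "\<exists>l\<in>S. ecov (Ju u) l d" using ecov_iff[OF u _] d S by auto
  qed
qed

lemma dep_less: "anc x y \<Longrightarrow> x \<noteq> y \<Longrightarrow> dep x < dep y"
  using anc_dep anc_eq le_neq_implies_less by blast

lemma lohi: assumes u: "u \<in> U" shows "lo u < hi u"
  using dep_less[OF U_tb(2,3)[OF u]] lo_def hi_def by simp

lemma icov_u: assumes u: "u \<in> U" shows "icov (Ju u) (lo u) (hi u) F"
proof
  show "finite F" using finF .
  show "\<And>l. l \<in> F \<Longrightarrow> cvx (Ju u l)" using Ju_cvx[OF u] FL by auto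
  show "\<And>l. l \<in> F \<Longrightarrow> Ju u l \<subseteq> {lo u..hi u}" using Ju_sub[OF u] by auto
  show "covs (Ju u) (lo u) (hi u) F" using covs_iff[OF u FL] F_cov[OF u] by auto
  show "lo u < hi u" using lohi[OF u] .
qed

lemma FS_MC: "u \<in> U \<Longrightarrow> FS u \<in> icov.MC (Ju u) (lo u) (hi u) F"
  unfolding FS_def using icov.best(1)[OF icov_u] .

lemma FS_sub: "u \<in> U \<Longrightarrow> FS u \<subseteq> F"
  using icov.MC_cov[OF icov_u FS_MC] by blast

lemma FS_cov: assumes u: "u \<in> U" shows "LE u \<subseteq> (\<Union>l\<in>FS u. LE l)"
proof -
  have "covs (Ju u) (lo u) (hi u) (FS u)" using icov.MC_cov[OF icov_u[OF u] FS_MC[OF u]] by blast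
  moreover have "FS u \<subseteq> L" using FS_sub[OF u] FL by auto
  ultimately show ?thesis using covs_iff[OF u] by blast
qed

lemma FS_fin: "u \<in> U \<Longrightarrow> finite (FS u)" using FS_sub finF finite_subset by blast

lemma tau_in: "u \<in> U \<Longrightarrow> tau u \<in> FS u"
  unfolding tau_def using icov.topl(1)[OF icov_u FS_MC] .

lemma tau_F: "u \<in> U \<Longrightarrow> tau u \<in> F" using tau_in FS_sub by blast

lemma inner_F: "u \<in> U \<Longrightarrow> l \<in> inner u \<Longrightarrow> l \<in> F" using FS_sub unfolding inner_def by blast

lemma tau_top: assumes u: "u \<in> U" shows "vat u (Suc (lo u)) \<in> LE (tau u)"
proof -
  have "ecov (Ju u) (tau u) (Suc (lo u))" unfolding tau_def using icov.topl(2)[OF icov_u[OF u] FS_MC[OF u]] by simp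
  then show ?thesis using ecov_iff[OF u] tau_F[OF u] FL lohi[OF u] by auto
qed

lemma tau_ap: assumes u: "u \<in> U" shows "anc (ap (tau u)) (t u)"
proof -
  let ?z = "vat u (Suc (lo u))"
  have tl: "tau u \<in> L" using tau_F[OF u] FL by auto
  have z: "?z \<in> LV (tau u)" "?z \<noteq> ap (tau u)" using tau_top[OF u] unfolding LE_def by auto
  have a: "anc (ap (tau u)) ?z" using K1[OF tl z(1)] .
  have dz: "dep ?z = Suc (lo u)" using vat(2)[OF u] lohi[OF u] by simp
  have "dep (ap (tau u)) < dep ?z" using dep_less[OF a] z(2) by auto
  then have "dep (ap (tau u)) \<le> dep (t u)" using dz lo_def by simp
  moreover have "anc (t u) ?z" using LVu(4)[OF u vat(1)[OF u]] lohi[OF u] by simp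
  ultimately show ?thesis using anc_chain[OF a] by simp
qed

lemma inner_ap: assumes u: "u \<in> U" and A: "A \<in> inner u" shows "ap A \<in> LE u"
proof -
  note ic = icov_u[OF u]
  have AS: "A \<in> FS u" "A \<noteq> tau u" using A unfolding inner_def by auto
  have AL: "A \<in> L" using AS FS_sub[OF u] FL by auto
  have nlo: "lo u \<notin> Ju u A" using icov.inner_lo[OF ic FS_MC[OF u] AS(1)] AS(2) unfolding tau_def by simp
  obtain d where d: "lo u < d" "d \<le> hi u" "ecov (Ju u) A d"
    using icov.pe(1,2,3)[OF ic FS_MC[OF u] AS(1)] by blast
  have fin: "finite (Ju u A)" using Ju_sub[OF u] finite_subset by blast
  have ne: "Ju u A \<noteq> {}" using d unfolding ecov_def by auto
  define x where "x = Min (Ju u A)"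
  have xJ: "x \<in> Ju u A" unfolding x_def using fin ne by simp
  have xr: "lo u \<le> x" "x \<le> hi u" using xJ Ju_sub[OF u, of A] by auto
  have xlo: "lo u < x" using xr nlo xJ by (cases "x = lo u") auto
  have wl: "vat u x \<in> LV A" using Ju_vat[OF u xr] xJ by simp
  have a: "anc (ap A) (vat u x)" using K1[OF AL wl] .
  have "ap A = vat u x"
  proof (rule ccontr)
    assume ne2: "ap A \<noteq> vat u x"
    have x1: "lo u \<le> x - 1" "x - 1 \<le> hi u" using xlo xr by auto
    have "dep (ap A) < dep (vat u x)" using dep_less[OF a ne2] .
    then have dd: "dep (ap A) \<le> dep (vat u (x - 1))" using vat(2)[OF u xr] vat(2)[OF u x1] by simp
    have anc1: "anc (vat u (x - 1)) (vat u x)"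
      using LVu_anc[OF u vat(1)[OF u xr] vat(1)[OF u x1]] vat(2)[OF u xr] vat(2)[OF u x1] by simp
    have "anc (ap A) (vat u (x - 1))" using anc_chain[OF a anc1 dd] .
    then have "vat u (x - 1) \<in> LV A" using K2[OF AL wl _ anc1] by simp
    then have "x - 1 \<in> Ju u A" using Ju_vat[OF u x1] by simp
    then have "x \<le> x - 1" unfolding x_def using fin by simp
    then show False using xlo by simp
  qed
  moreover have "vat u x \<in> LE u" using LEu_vat[OF u] xlo xr by auto
  ultimately show ?thesis by simp
qed

lemma seg_J: assumes u: "u \<in> U" and x: "x \<in> LV u" and seg: "\<forall>y\<in>LV u. anc y x \<longrightarrow> y \<in> LV \<iota>"
  shows "{lo u..dep x} \<subseteq> Ju u \<iota>"
proof
  fix d assume d: "d \<in> {lo u..dep x}"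
  then have dr: "lo u \<le> d" "d \<le> hi u" using LVu[OF u x] by auto
  have "anc (vat u d) x" using LVu_anc[OF u x vat(1)[OF u dr]] vat(2)[OF u dr] d by simp
  then have "vat u d \<in> LV \<iota>" using seg vat(1)[OF u dr] by simp
  then show "d \<in> Ju u \<iota>" using Ju_vat[OF u dr] by simp
qed

lemma G3: assumes u: "u \<in> U" and x: "x \<in> LV u" shows "card {l \<in> FS u. x \<in> LV l} \<le> 2"
proof -
  have "{l \<in> FS u. x \<in> LV l} = {l \<in> FS u. dep x \<in> Ju u l}" using Ju_mem[OF u x] by simp
  then show ?thesis using icov.MC_le2[OF icov_u[OF u] FS_MC[OF u]] by simp
qed

lemma G4: assumes u: "u \<in> U" and iF: "\<iota> \<in> F" and x: "x \<in> LV u"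
  and seg: "\<forall>y\<in>LV u. anc y x \<longrightarrow> y \<in> LV \<iota>"
  shows "card {l \<in> inner u. x \<in> LV l} \<le> 1"
proof -
  have "{l \<in> inner u. x \<in> LV l} = {l \<in> FS u. l \<noteq> tau u \<and> dep x \<in> Ju u l}"
    using Ju_mem[OF u x] unfolding inner_def by auto
  then show ?thesis using icov.inner_le1[OF icov_u[OF u] iF seg_J[OF u x seg], of gap]
    unfolding FS_def tau_def by simp
qed

lemma G5: assumes u: "u \<in> U" and iF: "\<iota> \<in> F" and x: "x \<in> LV u"
  and seg: "\<forall>y\<in>LV u. anc y x \<longrightarrow> y \<in> LV \<iota>" and A: "A \<in> inner u" "x \<in> LV A"
  shows "dep (ap \<iota>) \<le> dep (ap (tau u))"
proof -
  have A': "A \<in> FS u" "A \<noteq> tau u" "dep x \<in> Ju u A" using A Ju_mem[OF u x] unfolding inner_def by auto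
  show ?thesis using icov.inner_g[OF icov_u[OF u] iF seg_J[OF u x seg], of A gap] A'
    unfolding FS_def tau_def gap_def by simp
qed

end


context setting begin

lemma Hard_U: "u \<in> Hard \<Longrightarrow> u \<in> U" unfolding Hard_def by auto

definition "has_owner l = (\<exists>u\<in>Hard. l \<in> inner u)"
definition "owner l = (THE u. u \<in> Hard \<and> l \<in> inner u)"

lemma owner_uniq: assumes "u \<in> Hard" "l \<in> inner u" "u' \<in> Hard" "l \<in> inner u'" shows "u = u'"
proof (rule ccontr)
  assume ne: "u \<noteq> u'"
  have "ap l \<in> LE u" "ap l \<in> LE u'" using inner_ap Hard_U assms by auto
  then show False using U_disj[OF Hard_U[OF assms(1)] Hard_U[OF assms(3)] ne] by auto
qed

lemma owner_eq: assumes "u \<in> Hard" "l \<in> inner u" shows "owner l = u"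
  unfolding owner_def
proof (rule the_equality)
  show "u \<in> Hard \<and> l \<in> inner u" using assms by simp
  fix u' assume "u' \<in> Hard \<and> l \<in> inner u'"
  then show "u' = u" using owner_uniq[OF assms] by auto
qed

lemma owner: assumes "has_owner l" shows "owner l \<in> Hard \<and> l \<in> inner (owner l)"
proof -
  obtain u where "u \<in> Hard" "l \<in> inner u" using assms unfolding has_owner_def by auto
  then show ?thesis using owner_eq by simp
qed

definition "hasp u = has_owner (tau u)"
definition "tpar u = owner (tau u)"

lemma tpar: assumes "u \<in> Hard" "hasp u"
  shows "tpar u \<in> Hard" "tau u \<in> inner (tpar u)" "ap (tau u) \<in> LE (tpar u)"
    "dep (t (tpar u)) < dep (t u)"
proof -
  show h: "tpar u \<in> Hard" "tau u \<in> inner (tpar u)" using owner assms unfolding hasp_def tpar_def by auto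
  show le: "ap (tau u) \<in> LE (tpar u)" using inner_ap[OF Hard_U[OF h(1)] h(2)] .
  have h1: "anc (t (tpar u)) (ap (tau u))" and h2: "ap (tau u) \<noteq> t (tpar u)" using le U_LE[OF Hard_U[OF h(1)]] by auto
  have "dep (t (tpar u)) < dep (ap (tau u))" using dep_less[OF h1] h2 by auto
  moreover have "dep (ap (tau u)) \<le> dep (t u)" using tau_ap[OF Hard_U[OF assms(1)]] anc_dep by blast
  ultimately show "dep (t (tpar u)) < dep (t u)" by simp
qed

function lev :: "'a set \<Rightarrow> nat" where
  "lev u = (if u \<in> Hard \<and> hasp u then Suc (lev (tpar u)) else 0)"
  by auto
termination
proof (relation "measure (\<lambda>u. dep (t u))")
  show "wf (measure (\<lambda>u. dep (t u)))" by simp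
  fix u assume "u \<in> Hard \<and> hasp u"
  then show "(tpar u, u) \<in> measure (\<lambda>u. dep (t u))" using tpar(4) by simp
qed

declare lev.simps[simp del]

lemma lev_par: "u \<in> Hard \<Longrightarrow> hasp u \<Longrightarrow> lev u = Suc (lev (tpar u))"
  by (subst lev.simps) simp

inductive tanc :: "'a set \<Rightarrow> 'a set \<Rightarrow> bool" where
  base: "u \<in> Hard \<Longrightarrow> hasp u \<Longrightarrow> tanc (tpar u) u"
| step: "tanc a (tpar u) \<Longrightarrow> u \<in> Hard \<Longrightarrow> hasp u \<Longrightarrow> tanc a u"

lemma tanc_props: "tanc a u \<Longrightarrow> a \<in> Hard \<and> u \<in> Hard \<and> lev a < lev u \<and> dep (t a) < dep (t u)"
proof (induction rule: tanc.induct)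
  case (base u)
  then show ?case using tpar[OF base] lev_par[OF base] by simp
next
  case (step a u)
  then show ?case using tpar[OF step(2,3)] lev_par[OF step(2,3)] by simp
qed

definition "Qs u v = {x \<in> LV u. anc x v}"
definition "qv u v = (SOME x. x \<in> Qs u v \<and> (\<forall>y\<in>Qs u v. dep y \<le> dep x))"

lemma qv: assumes u: "u \<in> U" and ne: "Qs u v \<noteq> {}"
  shows "qv u v \<in> LV u" "anc (qv u v) v" "\<And>y. y \<in> LV u \<Longrightarrow> anc y v \<Longrightarrow> dep y \<le> dep (qv u v)"
proof -
  have "Qs u v \<subseteq> V" unfolding Qs_def using LV_V[OF U_L[OF u]] by auto
  then have fin: "finite (Qs u v)" using finV by (rule finite_subset)
  let ?m = "Max (dep ` Qs u v)"
  have "?m \<in> dep ` Qs u v" using fin ne by (intro Max_in) auto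
  then obtain x where x: "x \<in> Qs u v" "dep x = ?m" by auto
  have "\<forall>y\<in>Qs u v. dep y \<le> dep x" using x fin by auto
  then have "\<exists>x. x \<in> Qs u v \<and> (\<forall>y\<in>Qs u v. dep y \<le> dep x)" using x by blast
  then have "qv u v \<in> Qs u v \<and> (\<forall>y\<in>Qs u v. dep y \<le> dep (qv u v))" unfolding qv_def by (rule someI_ex)
  then show "qv u v \<in> LV u" "anc (qv u v) v" "\<And>y. y \<in> LV u \<Longrightarrow> anc y v \<Longrightarrow> dep y \<le> dep (qv u v)"
    unfolding Qs_def by auto
qed

lemma inner_v_q: assumes u: "u \<in> U" and l: "l \<in> inner u" and v: "v \<in> LV l"
  shows "Qs u v \<noteq> {}" "qv u v \<in> LV l" "anc (ap l) (qv u v)" "dep (t u) < dep (qv u v)"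
    "qv u v \<in> LV u" "anc (qv u v) v" "ap l \<in> LE u"
proof -
  have lL: "l \<in> L" using inner_F[OF u l] FL by auto
  have al: "ap l \<in> LE u" using inner_ap[OF u l] .
  then show "ap l \<in> LE u" .
  have alu: "ap l \<in> LV u" using al unfolding LE_def by simp
  have av: "anc (ap l) v" using K1[OF lL v] .
  show ne: "Qs u v \<noteq> {}" unfolding Qs_def using alu av by auto
  note q = qv[OF u ne]
  show "qv u v \<in> LV u" "anc (qv u v) v" using q by auto
  have "dep (ap l) \<le> dep (qv u v)" using q(3)[OF alu av] .
  then show aq: "anc (ap l) (qv u v)" using anc_chain[OF av q(2)] by simp
  show "qv u v \<in> LV l" using K2[OF lL v aq q(2)] .
  have h1: "anc (t u) (ap l)" and h2: "ap l \<noteq> t u" using al U_LE[OF u] by auto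
  have "dep (t u) < dep (ap l)" using dep_less[OF h1] h2 by auto
  then show "dep (t u) < dep (qv u v)" using \<open>dep (ap l) \<le> dep (qv u v)\<close> by simp
qed

lemma inner_fin: "u \<in> U \<Longrightarrow> finite (inner u)" using FS_fin unfolding inner_def by auto

lemma N2: assumes u: "u \<in> U" and iF: "\<iota> \<in> F" and v: "v \<in> LV \<iota>" and a: "anc (ap \<iota>) (t u)"
  shows "card {l \<in> inner u. v \<in> LV l} \<le> 1"
proof (cases "\<exists>l\<in>inner u. v \<in> LV l")
  case False
  then have "{l \<in> inner u. v \<in> LV l} = {}" by auto
  then show ?thesis by (simp only:) simp
next
  case True
  then obtain l0 where l0: "l0 \<in> inner u" "v \<in> LV l0" by auto
  let ?q = "qv u v"
  note q0 = inner_v_q[OF u l0]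
  have sub: "{l \<in> inner u. v \<in> LV l} \<subseteq> {l \<in> inner u. ?q \<in> LV l}"
    using inner_v_q(2)[OF u] by blast
  have iL: "\<iota> \<in> L" using iF FL by auto
  have seg: "\<forall>y\<in>LV u. anc y ?q \<longrightarrow> y \<in> LV \<iota>"
  proof (intro ballI impI)
    fix y assume y: "y \<in> LV u" "anc y ?q"
    have "anc (ap \<iota>) y" using anc_trans[OF a LVu(4)[OF u y(1)]] .
    moreover have "anc y v" using anc_trans[OF y(2) q0(6)] .
    ultimately show "y \<in> LV \<iota>" using K2[OF iL v] by blast
  qed
  have "card {l \<in> inner u. ?q \<in> LV l} \<le> 1" using G4[OF u iF q0(5) seg] .
  moreover have "finite {l \<in> inner u. ?q \<in> LV l}" using inner_fin[OF u] by simp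
  ultimately show ?thesis using card_mono[OF _ sub] by linarith
qed

lemma N3: assumes u: "u \<in> U" shows "card {l \<in> inner u. v \<in> LV l} \<le> 2"
proof (cases "\<exists>l\<in>inner u. v \<in> LV l")
  case False
  then have "{l \<in> inner u. v \<in> LV l} = {}" by auto
  then show ?thesis by (simp only:) simp
next
  case True
  then obtain l0 where l0: "l0 \<in> inner u" "v \<in> LV l0" by auto
  note q0 = inner_v_q[OF u l0]
  have sub: "{l \<in> inner u. v \<in> LV l} \<subseteq> {l \<in> FS u. qv u v \<in> LV l}"
    using inner_v_q(2)[OF u] unfolding inner_def by blast
  have "finite {l \<in> FS u. qv u v \<in> LV l}" using FS_fin[OF u] by simp
  then show ?thesis using card_mono[OF _ sub] G3[OF u q0(5)] by linarith
qed

end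


lemma resid: assumes k: "0 < (k::nat)" "j < k" and h: "\<forall>i\<le>n. (x + i) mod k \<noteq> j"
  shows "n + 2 \<le> k"
proof (rule ccontr)
  assume "\<not> n + 2 \<le> k"
  then have nk: "k \<le> n + 1" by simp
  define i where "i = (j + k - x mod k) mod k"
  have "i < k" unfolding i_def using k by simp
  then have "i \<le> n" using nk by simp
  have xm: "x mod k < k" using k by simp
  have "(x + i) mod k = (x mod k + i) mod k" by (simp add: mod_add_left_eq)
  also have "\<dots> = (x mod k + (j + k - x mod k)) mod k" unfolding i_def by (simp add: mod_add_right_eq)
  also have "x mod k + (j + k - x mod k) = j + k" using xm by simp
  also have "(j + k) mod k = j" using k by simp
  finally have "(x + i) mod k = j" .
  then show False using h \<open>i \<le> n\<close> by blast
qed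

locale kj = setting +
  fixes k j :: nat
  assumes kpos: "0 < k" and jk: "j < k"
begin

definition "kept u \<longleftrightarrow> u \<in> Hard \<and> lev u mod k \<noteq> j"

lemma tau_ap_less: assumes "has_owner l" shows "dep (ap (tau (owner l))) < dep (ap l)"
proof -
  have c: "owner l \<in> Hard" "l \<in> inner (owner l)" using owner[OF assms] by auto
  have oU: "owner l \<in> U" using Hard_U c by simp
  have "ap l \<in> LE (owner l)" using inner_ap[OF oU c(2)] .
  then have h1: "anc (t (owner l)) (ap l)" and h2: "ap l \<noteq> t (owner l)" using U_LE[OF oU] by auto
  have "dep (t (owner l)) < dep (ap l)" using dep_less[OF h1] h2 by auto
  moreover have "dep (ap (tau (owner l))) \<le> dep (t (owner l))" using tau_ap[OF oU] anc_dep by blast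
  ultimately show ?thesis by simp
qed

function rtop :: "'a set \<Rightarrow> 'a set" where
  "rtop l = (if has_owner l \<and> kept (owner l) then rtop (tau (owner l)) else l)"
  by auto
termination
proof (relation "measure (\<lambda>l. dep (ap l))")
  show "wf (measure (\<lambda>l. dep (ap l)))" by simp
  fix l assume "has_owner l \<and> kept (owner l)"
  then show "(tau (owner l), l) \<in> measure (\<lambda>l. dep (ap l))" using tau_ap_less by simp
qed

declare rtop.simps[simp del]

lemma rtop_step: "has_owner l \<Longrightarrow> kept (owner l) \<Longrightarrow> rtop l = rtop (tau (owner l))"
  by (subst rtop.simps) simp

lemma rtop_self: "\<not> (has_owner l \<and> kept (owner l)) \<Longrightarrow> rtop l = l"
  by (subst rtop.simps) auto

lemma owner_U: "has_owner l \<Longrightarrow> owner l \<in> U" using owner Hard_U by blast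

lemma rtop_F: "l \<in> F \<Longrightarrow> rtop l \<in> F"
proof (induction l rule: rtop.induct)
  case (1 l)
  show ?case
  proof (cases "has_owner l \<and> kept (owner l)")
    case True
    then have "tau (owner l) \<in> F" using tau_F owner_U by blast
    then show ?thesis using 1 True rtop_step by simp
  next
    case False then show ?thesis using rtop_self 1 by simp
  qed
qed

lemma rtop_idem: "rtop (rtop l) = rtop l"
proof (induction l rule: rtop.induct)
  case (1 l)
  show ?case
  proof (cases "has_owner l \<and> kept (owner l)")
    case True
    then show ?thesis using 1 rtop_step by simp
  next
    case False then show ?thesis using rtop_self by simp
  qed
qed

lemma rtop_anc: "l \<in> L \<Longrightarrow> anc (ap (rtop l)) (ap l)"
proof (induction l rule: rtop.induct)
  case (1 l)
  show ?case
  proof (cases "has_owner l \<and> kept (owner l)")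
    case True
    let ?c = "owner l"
    have oU: "?c \<in> U" using owner_U True by blast
    have tL: "tau ?c \<in> L" using tau_F[OF oU] FL by auto
    have a1: "anc (ap (rtop (tau ?c))) (ap (tau ?c))" using 1 True tL by simp
    have a2: "anc (ap (tau ?c)) (t ?c)" using tau_ap[OF oU] .
    have "ap l \<in> LE ?c" using inner_ap[OF oU] owner True by blast
    then have a3: "anc (t ?c) (ap l)" using U_LE[OF oU] by auto
    show ?thesis using anc_trans[OF anc_trans[OF a1 a2] a3] rtop_step True by simp
  next
    case False
    have "ap l \<in> V" using ap_in[OF 1(2)] LV_V[OF 1(2)] by auto
    then show ?thesis using rtop_self[OF False] anc_refl by simp
  qed
qed

definition "M l0 = {c. kept c \<and> rtop (tau c) = l0}"
definition "CL l0 = {l \<in> F. rtop l = l0}"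
definition "S l0 v = {c \<in> M l0. \<exists>l\<in>inner c. v \<in> LV l}"

lemma M_H: "c \<in> M l0 \<Longrightarrow> c \<in> Hard" unfolding M_def kept_def by auto
lemma M_U: "c \<in> M l0 \<Longrightarrow> c \<in> U" using M_H Hard_U by blast

lemma M_ap: assumes "c \<in> M l0" shows "anc (ap l0) (t c)"
proof -
  have oU: "c \<in> U" using M_U assms .
  have "anc (ap (rtop (tau c))) (ap (tau c))" using rtop_anc tau_F[OF oU] FL by auto
  then show ?thesis using assms tau_ap[OF oU] anc_trans unfolding M_def by auto
qed

lemma fiber_owner: assumes "l \<in> CL l0" "l \<noteq> l0"
  shows "has_owner l" "owner l \<in> M l0" "l \<in> inner (owner l)"
proof -
  have h: "has_owner l \<and> kept (owner l)"
  proof (rule ccontr)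
    assume "\<not> ?thesis"
    then have "rtop l = l" using rtop_self by simp
    then show False using assms unfolding CL_def by simp
  qed
  then show "has_owner l" "l \<in> inner (owner l)" using owner by auto
  have "rtop (tau (owner l)) = l0" using rtop_step h assms unfolding CL_def by auto
  then show "owner l \<in> M l0" using h unfolding M_def by simp
qed

lemma KP: "tanc a u \<Longrightarrow> a \<in> M l0 \<Longrightarrow> u \<in> M l0 \<Longrightarrow> \<forall>i\<le>lev u - lev a. (lev a + i) mod k \<noteq> j"
proof (induction rule: tanc.induct)
  case (base u)
  have lu: "lev u = Suc (lev (tpar u))" using lev_par[OF base(1,2)] .
  have ka: "lev (tpar u) mod k \<noteq> j" using base(3) unfolding M_def kept_def by auto
  have ku: "lev u mod k \<noteq> j" using base(4) unfolding M_def kept_def by auto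
  show ?case
  proof (intro allI impI)
    fix i assume "i \<le> lev u - lev (tpar u)"
    then have "i = 0 \<or> i = 1" using lu by auto
    then show "(lev (tpar u) + i) mod k \<noteq> j" using ka ku lu by auto
  qed
next
  case (step a u)
  have hp: "u \<in> Hard" "hasp u" using step by auto
  note tp = tpar[OF hp]
  have tpk: "kept (tpar u)"
  proof (rule ccontr)
    assume nk: "\<not> kept (tpar u)"
    have "rtop (tau u) = tau u" using rtop_self nk hp(2) unfolding hasp_def tpar_def by auto
    then have l0: "l0 = tau u" using step.prems(2) unfolding M_def by simp
    have "dep (ap l0) \<le> dep (t a)" using M_ap[OF step.prems(1)] anc_dep by blast
    moreover have "dep (t a) < dep (t (tpar u))" using tanc_props[OF step.hyps(1)] by simp
    moreover have "dep (t (tpar u)) < dep (ap (tau u))"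
    proof -
      have "anc (t (tpar u)) (ap (tau u))" "ap (tau u) \<noteq> t (tpar u)" using tp(3) U_LE Hard_U[OF tp(1)] by auto
      then show ?thesis using dep_less by auto
    qed
    ultimately show False using l0 by simp
  qed
  have "rtop (tau (tpar u)) = rtop (tau u)"
    using rtop_step[of "tau u"] tpk hp(2) unfolding hasp_def tpar_def by simp
  then have tpM: "tpar u \<in> M l0" using tpk step.prems(2) unfolding M_def by simp
  have IH: "\<forall>i\<le>lev (tpar u) - lev a. (lev a + i) mod k \<noteq> j" using step.prems(1) tpM step.IH by simp
  have lu: "lev u = Suc (lev (tpar u))" using lev_par[OF hp] .
  have la: "lev a < lev (tpar u)" using tanc_props[OF step.hyps(1)] by simp
  have ku: "lev u mod k \<noteq> j" using step.prems(2) unfolding M_def kept_def by auto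
  show ?case
  proof (intro allI impI)
    fix i assume i: "i \<le> lev u - lev a"
    show "(lev a + i) mod k \<noteq> j"
    proof (cases "i \<le> lev (tpar u) - lev a")
      case True then show ?thesis using IH by simp
    next
      case False
      then have "lev a + i = lev u" using i lu la by simp
      then show ?thesis using ku by simp
    qed
  qed
qed

lemma climb_aux:
  assumes m: "m \<in> M l0" and \<iota>: "\<iota> \<in> inner m" "v \<in> LV \<iota>"
  shows "dep (t u) = n \<Longrightarrow> u \<in> M l0 \<Longrightarrow> A \<in> inner u \<Longrightarrow> x \<in> LV u \<Longrightarrow> x \<in> LV A \<Longrightarrow> anc x v
    \<Longrightarrow> anc (qv m v) (t u) \<Longrightarrow> tanc m u"
proof (induction n arbitrary: u A x rule: less_induct)
  case (less n)
  have mH: "m \<in> Hard" and mU: "m \<in> U" using M_H M_U m by auto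
  have uH: "u \<in> Hard" and uU: "u \<in> U" using M_H M_U less.prems(2) by auto
  let ?q = "qv m v" and ?y = "ap \<iota>"
  note qm = inner_v_q[OF mU \<iota>]
  have iF: "\<iota> \<in> F" using inner_F[OF mU \<iota>(1)] .
  have iL: "\<iota> \<in> L" using iF FL by auto
  have yq: "anc ?y ?q" using qm(3) .
  have yt: "anc ?y (t u)" using anc_trans[OF yq less.prems(7)] .
  have yLE: "?y \<in> LE m" using qm(7) .
  have tmy: "anc (t m) ?y" and ytm: "?y \<noteq> t m" using yLE U_LE[OF mU] by auto
  have dty: "dep (t m) < dep ?y" using dep_less[OF tmy] ytm by auto
  have seg: "\<forall>z\<in>LV u. anc z x \<longrightarrow> z \<in> LV \<iota>"
  proof (intro ballI impI)
    fix z assume z: "z \<in> LV u" "anc z x"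
    have "anc ?y z" using anc_trans[OF yt LVu(4)[OF uU z(1)]] .
    moreover have "anc z v" using anc_trans[OF z(2) less.prems(6)] .
    ultimately show "z \<in> LV \<iota>" using K2[OF iL \<iota>(2)] by blast
  qed
  let ?p = "ap (tau u)"
  have g5: "dep ?y \<le> dep ?p" using G5[OF uU iF less.prems(4) seg less.prems(3) less.prems(5)] .
  have pt: "anc ?p (t u)" using tau_ap[OF uU] .
  have tv: "anc (t u) v" using anc_trans[OF LVu(4)[OF uU less.prems(4)] less.prems(6)] .
  have pv: "anc ?p v" using anc_trans[OF pt tv] .
  have yp: "anc ?y ?p" using anc_chain[OF yt pt g5] .
  show "tanc m u"
  proof (cases "has_owner (tau u) \<and> kept (owner (tau u))")
    case True
    have hp: "hasp u" using True unfolding hasp_def by simp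
    note tp = tpar[OF uH hp]
    let ?c = "tpar u"
    have oU: "?c \<in> U" using Hard_U tp(1) by simp
    have "rtop (tau ?c) = rtop (tau u)" using rtop_step[of "tau u"] True unfolding tpar_def by simp
    then have oM: "?c \<in> M l0" using True less.prems(2) unfolding M_def tpar_def by simp
    show ?thesis
    proof (cases "?c = m")
      case True then show ?thesis using tanc.base[OF uH hp] by simp
    next
      case False
      have pLEo: "?p \<in> LE ?c" using tp(3) .
      have qp: "dep ?q < dep ?p"
      proof (rule ccontr)
        assume "\<not> dep ?q < dep ?p"
        then have "anc ?p ?q" using anc_chain[OF pv qm(6)] by simp
        then have "anc ?p (b m)" using anc_trans LVu(5)[OF mU qm(5)] by blast
        moreover have "anc (t m) ?p" using anc_trans[OF tmy yp] .
        moreover have "?p \<noteq> t m" using dty g5 by auto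
        ultimately have "?p \<in> LE m" using U_LE[OF mU] by simp
        then show False using pLEo U_disj[OF mU oU] False by auto
      qed
      have qpa: "anc ?q ?p" using anc_chain[OF qm(6) pv] qp by simp
      have top: "anc (t ?c) ?p" using pLEo U_LE[OF oU] by auto
      have pbo: "anc ?p (b ?c)" using pLEo U_LE[OF oU] by auto
      have qto: "dep ?q \<le> dep (t ?c)"
      proof (rule ccontr)
        assume "\<not> dep ?q \<le> dep (t ?c)"
        then have lt: "dep (t ?c) < dep ?q" by simp
        have "anc (t ?c) ?q" using anc_chain[OF top qpa] lt by simp
        moreover have "anc ?q (b ?c)" using anc_trans[OF qpa pbo] .
        moreover have "?q \<noteq> t ?c" using lt by auto
        ultimately have q1: "?q \<in> LE ?c" using U_LE[OF oU] by simp
        have "?q \<noteq> t m" using qm(4) by auto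
        then have "?q \<in> LE m" using qm(5) U_LE[OF mU] U_LV[OF mU] by auto
        then show False using q1 U_disj[OF mU oU] False by auto
      qed
      have qto': "anc ?q (t ?c)" using anc_chain[OF qpa top qto] .
      have pLVo: "?p \<in> LV ?c" using pLEo unfolding LE_def by simp
      have pLVt: "?p \<in> LV (tau u)" using ap_in tau_F[OF uU] FL by auto
      have "tanc m ?c" using less.IH[OF _ refl oM tp(2) pLVo pLVt pv qto'] tp(4) less.prems(1) by simp
      then show ?thesis using tanc.step[OF _ uH hp] by simp
    qed
  next
    case False
    then have "rtop (tau u) = tau u" using rtop_self by simp
    then have "l0 = tau u" using less.prems(2) unfolding M_def by simp
    then have "dep ?p \<le> dep (t m)" using M_ap[OF m] anc_dep by blast
    then show ?thesis using dty g5 by simp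
  qed
qed

lemma climb:
  assumes "m \<in> M l0" "\<iota> \<in> inner m" "v \<in> LV \<iota>" "u \<in> M l0" "A \<in> inner u" "x \<in> LV u" "x \<in> LV A" "anc x v"
    "anc (qv m v) (t u)"
  shows "tanc m u"
  using climb_aux[OF assms(1-3) refl assms(4-9)] .

end


context kj begin

lemma S_M: "c \<in> S l0 v \<Longrightarrow> c \<in> M l0" unfolding S_def by auto

lemma S_link: assumes "c \<in> S l0 v" obtains l where "l \<in> inner c" "v \<in> LV l"
  using assms unfolding S_def by auto

lemma ord_lemma:
  assumes c: "c \<in> S l0 v" and c': "c' \<in> S l0 v" and ne: "c \<noteq> c'" and d: "dep (t c) \<le> dep (t c')"
  shows "dep (t c) < dep (t c')" "anc (qv c v) (t c')"
proof -
  have cU: "c \<in> U" and c'U: "c' \<in> U" using M_U[OF S_M[OF c]] M_U[OF S_M[OF c']] by auto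
  obtain l where l: "l \<in> inner c" "v \<in> LV l" using S_link[OF c] .
  obtain l' where l': "l' \<in> inner c'" "v \<in> LV l'" using S_link[OF c'] .
  note q = inner_v_q[OF cU l] and q' = inner_v_q[OF c'U l']
  let ?q = "qv c v" and ?q' = "qv c' v"
  have tv: "anc (t c) v" using anc_trans[OF LVu(4)[OF cU q(5)] q(6)] .
  have tv': "anc (t c') v" using anc_trans[OF LVu(4)[OF c'U q'(5)] q'(6)] .
  have key: False if z: "anc z ?q" "anc z ?q'" "dep (t c) < dep z" "dep (t c') < dep z" for z
  proof -
    have zv: "anc z v" using anc_trans[OF z(1) q(6)] .
    have "anc (t c) z" using anc_chain[OF tv zv] z(3) by simp
    moreover have "anc z (b c)" using anc_trans[OF z(1) LVu(5)[OF cU q(5)]] .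
    moreover have "z \<noteq> t c" using z(3) by auto
    ultimately have z1: "z \<in> LE c" using U_LE[OF cU] by simp
    have "anc (t c') z" using anc_chain[OF tv' zv] z(4) by simp
    moreover have "anc z (b c')" using anc_trans[OF z(2) LVu(5)[OF c'U q'(5)]] .
    moreover have "z \<noteq> t c'" using z(4) by auto
    ultimately have z2: "z \<in> LE c'" using U_LE[OF c'U] by simp
    show False using U_disj[OF cU c'U ne] z1 z2 by auto
  qed
  have qt: "dep ?q \<le> dep (t c')"
  proof (rule ccontr)
    assume h: "\<not> dep ?q \<le> dep (t c')"
    show False
    proof (cases "dep ?q \<le> dep ?q'")
      case True
      have "anc ?q ?q'" using anc_chain[OF q(6) q'(6) True] .
      then show False using key[of ?q] anc_refl anc_V[OF q(6)] h q(4) by auto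
    next
      case False
      have "anc ?q' ?q" using anc_chain[OF q'(6) q(6)] False by simp
      then show False using key[of ?q'] anc_refl anc_V[OF q'(6)] h q'(4) d False by auto
    qed
  qed
  then show "anc ?q (t c')" using anc_chain[OF q(6) tv'] by simp
  show "dep (t c) < dep (t c')" using qt q(4) by simp
qed

lemma compar: assumes c: "c \<in> S l0 v" and c': "c' \<in> S l0 v" and ne: "c \<noteq> c'"
  shows "tanc c c' \<or> tanc c' c"
proof -
  have gen: "tanc c c'" if c: "c \<in> S l0 v" and c': "c' \<in> S l0 v" and ne: "c \<noteq> c'"
    and d: "dep (t c) \<le> dep (t c')" for c c'
  proof -
    have c'U: "c' \<in> U" using M_U[OF S_M[OF c']] .
    obtain l where l: "l \<in> inner c" "v \<in> LV l" using S_link[OF c] .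
    obtain l' where l': "l' \<in> inner c'" "v \<in> LV l'" using S_link[OF c'] .
    note q' = inner_v_q[OF c'U l']
    show ?thesis using climb[OF S_M[OF c] l S_M[OF c'] l'(1) q'(5) q'(2) q'(6) ord_lemma(2)[OF c c' ne d]] .
  qed
  show ?thesis using gen[OF c c' ne] gen[OF c' c ne[symmetric]] by linarith
qed

lemma S_fin: "finite (S l0 v)"
proof -
  have "S l0 v \<subseteq> U" using M_U[OF S_M] by blast
  then show ?thesis using finU finite_subset by blast
qed

lemma S_bound: assumes ne: "S l0 v \<noteq> {}"
  obtains s1 where "s1 \<in> S l0 v" "\<And>c. c \<in> S l0 v \<Longrightarrow> c \<noteq> s1 \<Longrightarrow> tanc s1 c" "card (S l0 v) + 1 \<le> k"
proof -
  let ?S = "S l0 v"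
  have fin: "finite ?S" using S_fin .
  let ?m = "Min (lev ` ?S)"
  have "?m \<in> lev ` ?S" using fin ne by (intro Min_in) auto
  then obtain s1 where s1: "s1 \<in> ?S" "lev s1 = ?m" by auto
  have mn: "\<And>c. c \<in> ?S \<Longrightarrow> lev s1 \<le> lev c" using s1 fin by simp
  have anc1: "tanc s1 c" if c: "c \<in> ?S" "c \<noteq> s1" for c
  proof -
    have "tanc s1 c \<or> tanc c s1" using compar[OF s1(1) c(1) c(2)[symmetric]] .
    moreover have "\<not> tanc c s1" using tanc_props mn[OF c(1)] by fastforce
    ultimately show ?thesis by simp
  qed
  have inj: "inj_on lev ?S"
  proof (rule inj_onI)
    fix c c' assume h: "c \<in> ?S" "c' \<in> ?S" "lev c = lev c'"
    show "c = c'"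
    proof (rule ccontr)
      assume "c \<noteq> c'"
      then have "tanc c c' \<or> tanc c' c" using compar h by blast
      then show False using tanc_props h(3) by fastforce
    qed
  qed
  have k2: "2 \<le> k"
  proof -
    have "lev s1 mod k \<noteq> j" using S_M[OF s1(1)] unfolding M_def kept_def by auto
    then show ?thesis using jk kpos by (cases "k = 1") auto
  qed
  have sub: "lev ` ?S \<subseteq> {lev s1..lev s1 + (k - 2)}"
  proof
    fix x assume "x \<in> lev ` ?S"
    then obtain c where c: "c \<in> ?S" "x = lev c" by auto
    show "x \<in> {lev s1..lev s1 + (k - 2)}"
    proof (cases "c = s1")
      case True then show ?thesis using c by simp
    next
      case False
      have tc: "tanc s1 c" using anc1 c(1) False by simp
      have "\<forall>i\<le>lev c - lev s1. (lev s1 + i) mod k \<noteq> j"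
        using KP[OF tc S_M[OF s1(1)] S_M[OF c(1)]] .
      then have "lev c - lev s1 + 2 \<le> k" using resid[OF kpos jk] by blast
      then show ?thesis using c mn[OF c(1)] by auto
    qed
  qed
  have "card ?S = card (lev ` ?S)" using card_image[OF inj] by simp
  also have "\<dots> \<le> card {lev s1..lev s1 + (k - 2)}" using card_mono[OF _ sub] by simp
  also have "\<dots> = k - 1" using k2 by simp
  finally have "card ?S + 1 \<le> k" using k2 by simp
  then show ?thesis using that s1(1) anc1 by blast
qed

lemma count: assumes l0F: "l0 \<in> F"
  shows "card {l \<in> CL l0. v \<in> LV l} \<le> k"
proof -
  let ?S = "S l0 v"
  let ?A = "{l \<in> {l0}. v \<in> LV l}" and ?B = "\<lambda>c. {l \<in> inner c. v \<in> LV l}"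
  have sub: "{l \<in> CL l0. v \<in> LV l} \<subseteq> ?A \<union> (\<Union>c\<in>?S. ?B c)"
  proof
    fix l assume l: "l \<in> {l \<in> CL l0. v \<in> LV l}"
    show "l \<in> ?A \<union> (\<Union>c\<in>?S. ?B c)"
    proof (cases "l = l0")
      case True then show ?thesis using l by simp
    next
      case False
      note fo = fiber_owner[of l l0]
      have "owner l \<in> ?S" using fo l False unfolding S_def by auto
      then show ?thesis using fo l False by auto
    qed
  qed
  have finB: "\<And>c. c \<in> ?S \<Longrightarrow> finite (?B c)" using inner_fin[OF M_U[OF S_M]] by auto
  have finU: "finite (?A \<union> (\<Union>c\<in>?S. ?B c))" using finB S_fin by auto
  have c1: "card {l \<in> CL l0. v \<in> LV l} \<le> card ?A + card (\<Union>c\<in>?S. ?B c)"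
    using card_mono[OF finU sub] card_Un_le[of ?A "\<Union>c\<in>?S. ?B c"] by linarith
  have c2: "card (\<Union>c\<in>?S. ?B c) \<le> (\<Sum>c\<in>?S. card (?B c))" using card_UN_le[OF S_fin] .
  have "?A \<subseteq> {l0}" by auto
  then have cA: "card ?A \<le> 1" using card_mono[of "{l0}" ?A] by simp
  show ?thesis
  proof (cases "?S = {}")
    case True
    then show ?thesis using c1 cA kpos by simp
  next
    case False
    obtain s1 where s1: "s1 \<in> ?S" "\<And>c. c \<in> ?S \<Longrightarrow> c \<noteq> s1 \<Longrightarrow> tanc s1 c" "card ?S + 1 \<le> k"
      using S_bound[OF False] by blast
    have s1U: "s1 \<in> U" using M_U[OF S_M[OF s1(1)]] .
    obtain l1 where l1: "l1 \<in> inner s1" "v \<in> LV l1" using S_link[OF s1(1)] .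
    have l1F: "l1 \<in> F" using inner_F[OF s1U l1(1)] .
    have rest: "card (?B c) \<le> 1" if c: "c \<in> ?S - {s1}" for c
    proof -
      have cU: "c \<in> U" using M_U[OF S_M] c by auto
      have tc: "tanc s1 c" using s1(2) c by auto
      have d: "dep (t s1) \<le> dep (t c)" using tanc_props[OF tc] by simp
      have "anc (qv s1 v) (t c)" using ord_lemma(2)[OF s1(1) _ _ d] c by auto
      then have "anc (ap l1) (t c)" using anc_trans inner_v_q(3)[OF s1U l1] by blast
      then show ?thesis using N2[OF cU l1F l1(2)] by simp
    qed
    have first: "card ?A + card (?B s1) \<le> 2"
    proof (cases "v \<in> LV l0")
      case True
      have "anc (ap l0) (t s1)" using M_ap S_M s1(1) by blast
      then have "card (?B s1) \<le> 1" using N2[OF s1U l0F True] by simp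
      then show ?thesis using cA by simp
    next
      case False
      then have "?A = {}" by auto
      then have "card ?A = 0" by (simp only:) simp
      then show ?thesis using N3[OF s1U, of v] by linarith
    qed
    have "(\<Sum>c\<in>?S. card (?B c)) = card (?B s1) + (\<Sum>c\<in>?S - {s1}. card (?B c))"
      using sum.remove[OF S_fin s1(1)] by simp
    also have "(\<Sum>c\<in>?S - {s1}. card (?B c)) \<le> (\<Sum>c\<in>?S - {s1}. 1)"
      using rest by (intro sum_mono) auto
    also have "(\<Sum>c\<in>?S - {s1}. (1::nat)) = card ?S - 1" using s1(1) S_fin by simp
    finally have "(\<Sum>c\<in>?S. card (?B c)) \<le> card (?B s1) + (card ?S - 1)" by simp
    moreover have "0 < card ?S" using False S_fin by (simp add: card_gt_0_iff)
    ultimately show ?thesis using c1 c2 first s1(3) by linarith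
  qed
qed

end


context kj begin

definition "Cs = CL ` {l0 \<in> F. rtop l0 = l0}"

lemma part: "partition_on F Cs"
proof (rule partition_onI)
  show "\<Union>Cs = F"
  proof (intro equalityI subsetI)
    fix l assume "l \<in> \<Union>Cs" then show "l \<in> F" unfolding Cs_def CL_def by auto
  next
    fix l assume l: "l \<in> F"
    have "l \<in> CL (rtop l)" unfolding CL_def using l by simp
    moreover have "rtop l \<in> {l0 \<in> F. rtop l0 = l0}" using rtop_F[OF l] rtop_idem by simp
    ultimately show "l \<in> \<Union>Cs" unfolding Cs_def by blast
  qed
  fix p q assume p: "p \<in> Cs" and q: "q \<in> Cs" and ne: "p \<noteq> q"
  then obtain a c where "p = CL a" "q = CL c" unfolding Cs_def by auto
  then show "disjnt p q" using ne unfolding CL_def disjnt_def by auto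
next
  show "{} \<notin> Cs"
  proof
    assume "{} \<in> Cs"
    then obtain l0 where "l0 \<in> F" "rtop l0 = l0" "CL l0 = {}" unfolding Cs_def by auto
    then show False unfolding CL_def by auto
  qed
qed

lemma thin: "C \<in> Cs \<Longrightarrow> k_thin V E k C"
  unfolding Cs_def k_thin_def using count unfolding LV_def by auto

lemma cover: assumes u: "u \<in> U" and nr: "u \<notin> {u \<in> Hard. lev u mod k = j}"
  shows "\<exists>C\<in>Cs. link_edges E u \<subseteq> (\<Union>l\<in>C. link_edges E l)"
proof -
  have CsL: "\<And>C. C \<in> Cs \<Longrightarrow> C \<subseteq> L" unfolding Cs_def CL_def using FL by auto
  have inCs: "CL (rtop l) \<in> Cs" if "l \<in> F" for l
    unfolding Cs_def using rtop_F[OF that] rtop_idem by auto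
  show ?thesis
  proof (cases "u \<in> Hard")
    case False
    then obtain l where l: "l \<in> F" "LE u \<subseteq> LE l" using u unfolding Hard_def by auto
    have "l \<in> CL (rtop l)" unfolding CL_def using l by simp
    then have "LE u \<subseteq> (\<Union>l\<in>CL (rtop l). LE l)" using l by auto
    then have "link_edges E u \<subseteq> (\<Union>l\<in>CL (rtop l). link_edges E l)"
      using cover_iff[OF u CsL[OF inCs[OF l(1)]]] by simp
    then show ?thesis using inCs[OF l(1)] by blast
  next
    case True
    then have kp: "kept u" using nr unfolding kept_def by auto
    let ?C = "CL (rtop (tau u))"
    have sub: "FS u \<subseteq> ?C"
    proof
      fix l assume l: "l \<in> FS u"
      have lF: "l \<in> F" using FS_sub[OF u] l by auto
      show "l \<in> ?C"
      proof (cases "l = tau u")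
        case True then show ?thesis unfolding CL_def using lF by simp
      next
        case False
        then have li: "l \<in> inner u" using l unfolding inner_def by simp
        have ho: "has_owner l" unfolding has_owner_def using True li by auto
        have "owner l = u" using owner_eq[OF True li] .
        then have "rtop l = rtop (tau u)" using rtop_step[OF ho] kp by simp
        then show ?thesis unfolding CL_def using lF by simp
      qed
    qed
    have "LE u \<subseteq> (\<Union>l\<in>?C. LE l)" using FS_cov[OF u] sub by blast
    then have "link_edges E u \<subseteq> (\<Union>l\<in>?C. link_edges E l)"
      using cover_iff[OF u CsL[OF inCs[OF tau_F[OF u]]]] by simp
    then show ?thesis using inCs[OF tau_F[OF u]] by blast
  qed
qed

end

context setting begin

lemma exists_j: assumes k: "0 < k"
  shows "\<exists>j<k. real k * sum w {u \<in> Hard. lev u mod k = j} \<le> sum w U"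
proof (rule ccontr)
  assume "\<not> ?thesis"
  then have h: "\<And>j. j < k \<Longrightarrow> sum w U < real k * sum w {u \<in> Hard. lev u mod k = j}" by force
  have finH: "finite Hard" using finU unfolding Hard_def by simp
  have "(\<Sum>j<k. sum w {u \<in> Hard. lev u mod k = j}) = sum w Hard"
  proof -
    have "(\<lambda>u. lev u mod k) ` Hard \<subseteq> {..<k}" using k by auto
    from sum.group[OF finH finite_lessThan this, where h=w]
    show ?thesis by simp
  qed
  also have "\<dots> \<le> sum w U"
  proof (rule sum_mono2[OF finU])
    show "Hard \<subseteq> U" unfolding Hard_def by auto
    show "\<And>b. b \<in> U - Hard \<Longrightarrow> 0 \<le> w b" using wpos UL by (auto intro: less_imp_le)
  qed
  finally have s: "(\<Sum>j<k. sum w {u \<in> Hard. lev u mod k = j}) \<le> sum w U" .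
  have "(\<Sum>j<k. sum w U / real k) < (\<Sum>j<k. sum w {u \<in> Hard. lev u mod k = j})"
  proof (rule sum_strict_mono)
    show "finite {..<k}" by simp
    show "{..<k} \<noteq> {}" using k by auto
    fix j assume "j \<in> {..<k}"
    then show "sum w U / real k < sum w {u \<in> Hard. lev u mod k = j}"
      using h[of j] k by (simp add: divide_less_eq mult.commute)
  qed
  moreover have "(\<Sum>j<k. sum w U / real k) = sum w U" using k by simp
  ultimately show False using s by simp
qed

lemma main: assumes eps: "\<epsilon> > 0"
  shows "\<exists>\<C> R. partition_on F \<C> \<and> (\<forall>C\<in>\<C>. k_thin V E (nat \<lceil>1 / \<epsilon>\<rceil>) C) \<and>
           R \<subseteq> U \<and>
           (\<forall>u\<in>U - R. \<exists>C\<in>\<C>. link_edges E u \<subseteq> (\<Union>l\<in>C. link_edges E l)) \<and>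
           sum w R \<le> \<epsilon> * sum w U"
proof -
  define k where "k = nat \<lceil>1 / \<epsilon>\<rceil>"
  have kge: "1 / \<epsilon> \<le> real k" unfolding k_def by linarith
  have kpos: "0 < k"
  proof -
    have "0 < 1 / \<epsilon>" using eps by simp
    then show ?thesis using kge by linarith
  qed
  obtain j where j: "j < k" "real k * sum w {u \<in> Hard. lev u mod k = j} \<le> sum w U"
    using exists_j[OF kpos] by auto
  interpret K: kj V E r L w F U k j
    by (unfold_locales) (use kpos j in auto)
  let ?R = "{u \<in> Hard. lev u mod k = j}"
  have wU: "0 \<le> sum w U" using wpos UL by (intro sum_nonneg) (auto intro: less_imp_le)
  have "sum w ?R \<le> sum w U / real k" using j(2) kpos by (simp add: le_divide_eq mult.commute)
  also have "\<dots> \<le> \<epsilon> * sum w U"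
  proof -
    have "1 / real k \<le> \<epsilon>" using kge eps kpos by (simp add: divide_le_eq mult.commute)
    then have "sum w U * (1 / real k) \<le> sum w U * \<epsilon>" using wU by (intro mult_left_mono) auto
    then show ?thesis by (simp add: mult.commute)
  qed
  finally have wR: "sum w ?R \<le> \<epsilon> * sum w U" .
  have RU: "?R \<subseteq> U" unfolding Hard_def by auto
  show ?thesis
    apply (rule exI[of _ K.Cs], rule exI[of _ ?R])
    using K.part K.thin K.cover RU wR unfolding k_def by auto
qed

end

theorem theorem5:
  fixes V :: "'a set" and E L F U :: "'a set set" and w :: "'a set \<Rightarrow> real"
    and r :: 'a and \<epsilon> :: real
  assumes "wtap_instance V E L w"
    and "r \<in> V"
    and "wtap_solution E L F"
    and "U \<subseteq> L" and "\<forall>u\<in>U. is_up_link E r u"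
    and "\<forall>u\<in>U. \<forall>u'\<in>U. u \<noteq> u' \<longrightarrow> link_edges E u \<inter> link_edges E u' = {}"
    and "\<epsilon> > 0"
  shows "\<exists>\<C> R. partition_on F \<C> \<and> (\<forall>C\<in>\<C>. k_thin V E (nat \<lceil>1 / \<epsilon>\<rceil>) C) \<and>
           R \<subseteq> U \<and>
           (\<forall>u\<in>U - R. \<exists>C\<in>\<C>. link_edges E u \<subseteq> (\<Union>l\<in>C. link_edges E l)) \<and>
           sum w R \<le> \<epsilon> * sum w U"
  proof -
  have tree: "is_tree V E" using assms(1) unfolding wtap_instance_def by auto
  interpret S: setting V E r L w F U
    by unfold_locales (use assms tree in auto)
  show ?thesis using S.main[OF assms(7)] .
qed

end
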